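(* Let $(\mathcal R,\tau)$ be a t-minimal Hausdorff geometric structure and $\mathcal S$ a lore of $(\mathcal R,\tau)$. Let $X$ and $Y$ be $A$-definable sets with $\dim(X)=\dim(Y)$, and let $f:X\to Y$ be a finite-to-one $A$-definable function. Let $x\in X$ be generic over $A$. Then $f$ restricts to a loric homeomorphism between a neighborhood of $x$ in $X$ and a neighborhood of $f(x)$ in $Y$.
   Context: A structure $\mathcal R$ is geometric if (in all models of its theory) $\operatorname{acl}$ satisfies exchange and $\mathcal R$ eliminates $\exists^\infty$; $\dim$ denotes acl-dimension of tuples and definable sets, and $a\in X$ is generic over $A$ if $\dim(a/A)=\dim(X)$. "Definable" allows parameters. Given a topology $\tau$ on $R$ (extended to definable subsets of $R^n$ by product and subspace topologies), $(\mathcal R,\tau)$ is a Hausdorff geometric structure if: (1) $\tau$ is Hausdorff; (2) $\mathcal R$ is geometric and $\aleph_1$-saturated; (3) if $X\subset R^n$ is $A$-definable and $a\in\overline{\overline X-X}$ then $\dim(a/A)<\dim(X)$; (4) if $X$ is definable over a countable set $A$, $a\in X$ is generic over $A$, and $B\supseteq A$ is countable, then every neighborhood of $a$ contains a generic of $X$ over $B$; (5) if $X,Y$ and $Z\subset X\times Y$ are $A$-definable of the same dimension with both projections $Z\to X$, $Z\to Y$ finite-to-one, and $(x,y)\in Z$ is generic over $A$, then there are open neighborhoods $U\ni x$, $V\ni y$ such that $Z\cap(U\times V)$ is the graph of a homeomorphism $U\to V$. It is t-minimal if moreover there is a formula $\phi(x,\bar y)$ without parameters whose instances form a basis of $\tau$,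 and $R$ has no isolated points. A lore is a collection $\mathcal S$ of definable sets ("loric sets") such that: (i) $R$ and the diagonal of $R^2$ are loric, and loric sets are closed under finite products, finite intersections and coordinate permutations; (ii) if $f:X\to Y$ is a definable homeomorphism with $X$ and the graph of $f$ loric, then $Y$ is loric; (iii) every definable open subset of a loric set is loric, and a definable set admitting an open cover by loric sets is loric; (iv) every nonempty $A$-definable $X$ has a relatively open $A$-definable loric subset $X'$ with $\dim(X-X')<\dim(X)$. A loric map is a continuous function with loric graph; a loric homeomorphism is a loric map which is a homeomorphism. *)

theory Defs
  imports "HOL-Analysis.Abstract_Topology"
begin

datatype 'a trm = Var nat | Par 'a

datatype ('r, 'a) fm =
    Eq "'a trm" "'a trm"
  | Rel 'r "'a trm list"
  | Neg "('r, 'a) fm"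
  | Conj "('r, 'a) fm" "('r, 'a) fm"
  | Ex nat "('r, 'a) fm"

fun tval :: "(nat \<Rightarrow> 'a) \<Rightarrow> 'a trm \<Rightarrow> 'a" where
  "tval e (Var i) = e i"
| "tval e (Par a) = a"

text \<open>A structure with universe UNIV :: 'a set, interpretation I of relation symbols.\<close>
fun sat :: "('r \<Rightarrow> 'a list \<Rightarrow> bool) \<Rightarrow> (nat \<Rightarrow> 'a) \<Rightarrow> ('r, 'a) fm \<Rightarrow> bool" where
  "sat I e (Eq s t) = (tval e s = tval e t)"
| "sat I e (Rel R ts) = I R (map (tval e) ts)"
| "sat I e (Neg \<phi>) = (\<not> sat I e \<phi>)"
| "sat I e (Conj \<phi> \<psi>) = (sat I e \<phi> \<and> sat I e \<psi>)"
| "sat I e (Ex i \<phi>) = (\<exists>a. sat I (e(i := a)) \<phi>)"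

fun tfv :: "'a trm \<Rightarrow> nat set" where
  "tfv (Var i) = {i}"
| "tfv (Par a) = {}"

fun tpars :: "'a trm \<Rightarrow> 'a set" where
  "tpars (Var i) = {}"
| "tpars (Par a) = {a}"

fun fv :: "('r, 'a) fm \<Rightarrow> nat set" where
  "fv (Eq s t) = tfv s \<union> tfv t"
| "fv (Rel R ts) = (\<Union>t\<in>set ts. tfv t)"
| "fv (Neg \<phi>) = fv \<phi>"
| "fv (Conj \<phi> \<psi>) = fv \<phi> \<union> fv \<psi>"
| "fv (Ex i \<phi>) = fv \<phi> - {i}"

fun pars :: "('r, 'a) fm \<Rightarrow> 'a set" where
  "pars (Eq s t) = tpars s \<union> tpars t"
| "pars (Rel R ts) = (\<Union>t\<in>set ts. tpars t)"
| "pars (Neg \<phi>) = pars \<phi>"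
| "pars (Conj \<phi> \<psi>) = pars \<phi> \<union> pars \<psi>"
| "pars (Ex i \<phi>) = pars \<phi>"

definition env :: "'a list \<Rightarrow> nat \<Rightarrow> 'a" where
  "env xs i = (if i < length xs then xs ! i else undefined)"

text \<open>Subsets of R^n are sets of lists of length n.\<close>
definition tuples :: "nat \<Rightarrow> 'a list set" where
  "tuples n = {xs. length xs = n}"

definition defbl :: "('r \<Rightarrow> 'a list \<Rightarrow> bool) \<Rightarrow> 'a set \<Rightarrow> 'a list set \<Rightarrow> bool" where
  "defbl I A X \<longleftrightarrow> (\<exists>n (\<phi>::('r,'a) fm). pars \<phi> \<subseteq> A \<and> fv \<phi> \<subseteq> {..<n} \<and>
       X = {xs \<in> tuples n. sat I (env xs) \<phi>})"

definition definable :: "('r \<Rightarrow> 'a list \<Rightarrow> bool) \<Rightarrow> 'a list set \<Rightarrow> bool" where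
  "definable I X \<longleftrightarrow> defbl I UNIV X"

definition acl :: "('r \<Rightarrow> 'a list \<Rightarrow> bool) \<Rightarrow> 'a set \<Rightarrow> 'a set" where
  "acl I A = {b. \<exists>X. defbl I A X \<and> X \<subseteq> tuples 1 \<and> finite X \<and> [b] \<in> X}"

definition acl_indep :: "('r \<Rightarrow> 'a list \<Rightarrow> bool) \<Rightarrow> 'a set \<Rightarrow> 'a set \<Rightarrow> bool" where
  "acl_indep I A B \<longleftrightarrow> (\<forall>b\<in>B. b \<notin> acl I (A \<union> (B - {b})))"

definition dim_tp :: "('r \<Rightarrow> 'a list \<Rightarrow> bool) \<Rightarrow> 'a list \<Rightarrow> 'a set \<Rightarrow> int" where
  "dim_tp I a A = int (Max {card B | B. B \<subseteq> set a \<and> acl_indep I A B})"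

definition dim_over :: "('r \<Rightarrow> 'a list \<Rightarrow> bool) \<Rightarrow> 'a list set \<Rightarrow> 'a set \<Rightarrow> int" where
  "dim_over I X A = (if X = {} then -1 else Max ((\<lambda>a. dim_tp I a A) ` X))"

text \<open>dim(X) for definable X, computed over a finite parameter set defining X
  (independent of the choice in an aleph_1-saturated geometric structure).\<close>
definition dim :: "('r \<Rightarrow> 'a list \<Rightarrow> bool) \<Rightarrow> 'a list set \<Rightarrow> int" where
  "dim I X = dim_over I X (SOME A. finite A \<and> defbl I A X)"

definition acl_exchange :: "('r \<Rightarrow> 'a list \<Rightarrow> bool) \<Rightarrow> bool" where
  "acl_exchange I \<longleftrightarrow> (\<forall>A b c. b \<in> acl I (insert c A) \<and> b \<notin> acl I A \<longrightarrow> c \<in> acl I (insert b A))"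

text \<open>Uniform finiteness (elimination of the quantifier "there exist infinitely many").\<close>
definition elim_ex_inf :: "('r \<Rightarrow> 'a list \<Rightarrow> bool) \<Rightarrow> bool" where
  "elim_ex_inf I \<longleftrightarrow> (\<forall>(\<phi>::('r,'a) fm) k. pars \<phi> = {} \<and> fv \<phi> \<subseteq> {..<Suc k} \<longrightarrow>
      (\<exists>N::nat. \<forall>bs. length bs = k \<and> finite {a. sat I (env (a # bs)) \<phi>} \<longrightarrow>
          card {a. sat I (env (a # bs)) \<phi>} \<le> N))"

definition aleph1_saturated :: "('r \<Rightarrow> 'a list \<Rightarrow> bool) \<Rightarrow> bool" where
  "aleph1_saturated I \<longleftrightarrow> (\<forall>A (\<Phi>::('r,'a) fm set). countable A \<and>
      (\<forall>\<phi>\<in>\<Phi>. pars \<phi> \<subseteq> A \<and> fv \<phi> \<subseteq> {0}) \<and>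
      (\<forall>\<Phi>0. finite \<Phi>0 \<and> \<Phi>0 \<subseteq> \<Phi> \<longrightarrow> (\<exists>a. \<forall>\<phi>\<in>\<Phi>0. sat I (env [a]) \<phi>)) \<longrightarrow>
      (\<exists>a. \<forall>\<phi>\<in>\<Phi>. sat I (env [a]) \<phi>))"

definition geometric :: "('r \<Rightarrow> 'a list \<Rightarrow> bool) \<Rightarrow> bool" where
  "geometric I \<longleftrightarrow> acl_exchange I \<and> elim_ex_inf I"

definition box :: "'a set list \<Rightarrow> 'a list set" where
  "box Os = {ys. length ys = length Os \<and> (\<forall>i<length Os. ys ! i \<in> Os ! i)}"

text \<open>Open sets of the disjoint union of all R^n with the product topologies.\<close>
definition lopen :: "'a topology \<Rightarrow> 'a list set \<Rightarrow> bool" where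
  "lopen \<tau> U \<longleftrightarrow> (\<forall>xs\<in>U. \<exists>Os. length Os = length xs \<and> (\<forall>i<length Os. openin \<tau> (Os ! i))
        \<and> xs \<in> box Os \<and> box Os \<subseteq> U)"

definition ropen :: "'a topology \<Rightarrow> 'a list set \<Rightarrow> 'a list set \<Rightarrow> bool" where
  "ropen \<tau> X V \<longleftrightarrow> (\<exists>U. lopen \<tau> U \<and> V = U \<inter> X)"

definition lclosure :: "'a topology \<Rightarrow> 'a list set \<Rightarrow> 'a list set" where
  "lclosure \<tau> S = {a. \<forall>U. lopen \<tau> U \<and> a \<in> U \<longrightarrow> U \<inter> S \<noteq> {}}"

definition lcont :: "'a topology \<Rightarrow> 'a list set \<Rightarrow> ('a list \<Rightarrow> 'a list) \<Rightarrow> bool" where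
  "lcont \<tau> X f \<longleftrightarrow> (\<forall>V. lopen \<tau> V \<longrightarrow> ropen \<tau> X {x \<in> X. f x \<in> V})"

definition lhomeo :: "'a topology \<Rightarrow> 'a list set \<Rightarrow> 'a list set \<Rightarrow> ('a list \<Rightarrow> 'a list) \<Rightarrow> bool" where
  "lhomeo \<tau> X Y f \<longleftrightarrow> bij_betw f X Y \<and> lcont \<tau> X f \<and> lcont \<tau> Y (the_inv_into X f)"

definition graph :: "'a list set \<Rightarrow> ('a list \<Rightarrow> 'a list) \<Rightarrow> 'a list set" where
  "graph X f = {x @ f x | x. x \<in> X}"

definition lprod :: "'a list set \<Rightarrow> 'a list set \<Rightarrow> 'a list set" where
  "lprod X Y = {x @ y | x y. x \<in> X \<and> y \<in> Y}"

definition hausdorff_geometric ::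
  "('r \<Rightarrow> 'a list \<Rightarrow> bool) \<Rightarrow> 'a topology \<Rightarrow> bool" where
  "hausdorff_geometric I \<tau> \<longleftrightarrow>
     topspace \<tau> = UNIV \<and>
     \<comment> \<open>(1) Hausdorff\<close>
     (\<forall>a b. a \<noteq> b \<longrightarrow> (\<exists>U V. openin \<tau> U \<and> openin \<tau> V \<and> a \<in> U \<and> b \<in> V \<and> U \<inter> V = {})) \<and>
     \<comment> \<open>(2) geometric and aleph_1-saturated\<close>
     geometric I \<and> aleph1_saturated I \<and>
     \<comment> \<open>(3) frontier condition\<close>
     (\<forall>A X n a. countable A \<and> defbl I A X \<and> X \<subseteq> tuples n \<and>
         a \<in> lclosure \<tau> (lclosure \<tau> X - X) \<longrightarrow> dim_tp I a A < dim I X) \<and>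
     \<comment> \<open>(4) generics are dense near generics\<close>
     (\<forall>A B X a U. countable A \<and> countable B \<and> A \<subseteq> B \<and> defbl I A X \<and>
         a \<in> X \<and> dim_tp I a A = dim I X \<and> lopen \<tau> U \<and> a \<in> U \<longrightarrow>
         (\<exists>b\<in>U \<inter> X. dim_tp I b B = dim I X)) \<and>
     \<comment> \<open>(5) generic local homeomorphism for finite-to-one correspondences\<close>
     (\<forall>A X Y Z n m x y. countable A \<and> X \<subseteq> tuples n \<and> Y \<subseteq> tuples m \<and>
         defbl I A X \<and> defbl I A Y \<and> defbl I A Z \<and> Z \<subseteq> lprod X Y \<and>
         dim I X = dim I Z \<and> dim I Y = dim I Z \<and>
         (\<forall>u\<in>X. finite {v \<in> Y. u @ v \<in> Z}) \<and> (\<forall>v\<in>Y. finite {u \<in> X. u @ v \<in> Z}) \<and>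
         x @ y \<in> Z \<and> x \<in> X \<and> y \<in> Y \<and> dim_tp I (x @ y) A = dim I Z \<longrightarrow>
         (\<exists>U V h. ropen \<tau> X U \<and> x \<in> U \<and> ropen \<tau> Y V \<and> y \<in> V \<and>
             lhomeo \<tau> U V h \<and> Z \<inter> lprod U V = graph U h))"

definition t_minimal :: "('r \<Rightarrow> 'a list \<Rightarrow> bool) \<Rightarrow> 'a topology \<Rightarrow> bool" where
  "t_minimal I \<tau> \<longleftrightarrow> hausdorff_geometric I \<tau> \<and>
     (\<exists>(\<phi>::('r,'a) fm) k. pars \<phi> = {} \<and> fv \<phi> \<subseteq> {..<Suc k} \<and>
        (\<forall>bs. length bs = k \<longrightarrow> openin \<tau> {a. sat I (env (a # bs)) \<phi>}) \<and>
        (\<forall>U a. openin \<tau> U \<and> a \<in> U \<longrightarrow>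
           (\<exists>bs. length bs = k \<and> a \<in> {c. sat I (env (c # bs)) \<phi>} \<and> {c. sat I (env (c # bs)) \<phi>} \<subseteq> U))) \<and>
     (\<forall>a. \<not> openin \<tau> {a})"

definition lore :: "('r \<Rightarrow> 'a list \<Rightarrow> bool) \<Rightarrow> 'a topology \<Rightarrow> 'a list set set \<Rightarrow> bool" where
  "lore I \<tau> S \<longleftrightarrow>
     (\<forall>X\<in>S. definable I X) \<and>
     \<comment> \<open>(i)\<close>
     {[a] | a. True} \<in> S \<and> {[a, a] | a. True} \<in> S \<and>
     (\<forall>X Y. X \<in> S \<and> Y \<in> S \<longrightarrow> lprod X Y \<in> S) \<and>
     (\<forall>X Y. X \<in> S \<and> Y \<in> S \<longrightarrow> X \<inter> Y \<in> S) \<and>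
     (\<forall>X n p. X \<in> S \<and> X \<subseteq> tuples n \<and> bij_betw p {..<n} {..<n} \<longrightarrow>
         (\<lambda>xs. map (\<lambda>i. xs ! p i) [0..<n]) ` X \<in> S) \<and>
     \<comment> \<open>(ii)\<close>
     (\<forall>X Y f. X \<in> S \<and> graph X f \<in> S \<and> definable I Y \<and> lhomeo \<tau> X Y f \<longrightarrow> Y \<in> S) \<and>
     \<comment> \<open>(iii)\<close>
     (\<forall>X V. X \<in> S \<and> definable I V \<and> V \<subseteq> X \<and> ropen \<tau> X V \<longrightarrow> V \<in> S) \<and>
     (\<forall>X. definable I X \<and> (\<forall>x\<in>X. \<exists>V\<in>S. V \<subseteq> X \<and> ropen \<tau> X V \<and> x \<in> V) \<longrightarrow> X \<in> S) \<and>
     \<comment> \<open>(iv)\<close>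
     (\<forall>A X. countable A \<and> defbl I A X \<and> X \<noteq> {} \<longrightarrow>
         (\<exists>X'. X' \<subseteq> X \<and> ropen \<tau> X X' \<and> defbl I A X' \<and> X' \<in> S \<and> dim I (X - X') < dim I X))"

definition loric_homeo ::
  "'a topology \<Rightarrow> 'a list set set \<Rightarrow> 'a list set \<Rightarrow> 'a list set \<Rightarrow> ('a list \<Rightarrow> 'a list) \<Rightarrow> bool" where
  "loric_homeo \<tau> S U V f \<longleftrightarrow> lhomeo \<tau> U V f \<and> graph U f \<in> S"

end

theory Submission
  imports Defs
begin

lemma finite_tpars: "finite (tpars t)" by (cases t) auto
lemma finite_pars: "finite (pars \<phi>)"
  by (induction \<phi>) (auto simp: finite_tpars)

fun tren :: "(nat \<Rightarrow> nat) \<Rightarrow> 'a trm \<Rightarrow> 'a trm" where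
  "tren \<rho> (Var i) = Var (\<rho> i)" | "tren \<rho> (Par a) = Par a"

fun ren :: "(nat \<Rightarrow> nat) \<Rightarrow> ('r,'a) fm \<Rightarrow> ('r,'a) fm" where
  "ren \<rho> (Eq s t) = Eq (tren \<rho> s) (tren \<rho> t)"
| "ren \<rho> (Rel R ts) = Rel R (map (tren \<rho>) ts)"
| "ren \<rho> (Neg \<phi>) = Neg (ren \<rho> \<phi>)"
| "ren \<rho> (Conj \<phi> \<psi>) = Conj (ren \<rho> \<phi>) (ren \<rho> \<psi>)"
| "ren \<rho> (Ex i \<phi>) = Ex (\<rho> i) (ren \<rho> \<phi>)"

lemma tval_tren: "tval e (tren \<rho> t) = tval (e \<circ> \<rho>) t" by (cases t) auto

lemma sat_ren: "inj \<rho> \<Longrightarrow> sat I e (ren \<rho> \<phi>) = sat I (e \<circ> \<rho>) \<phi>"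
proof (induction \<phi> arbitrary: e)
  case (Ex i \<phi>)
  have "\<And>a. (e(\<rho> i := a)) \<circ> \<rho> = (e \<circ> \<rho>)(i := a)"
    using Ex.prems by (auto simp: fun_eq_iff inj_eq)
  then show ?case using Ex.IH[OF Ex.prems] by (simp only: ren.simps sat.simps)
qed (auto simp: tval_tren comp_def)

lemma tpars_tren: "tpars (tren \<rho> t) = tpars t" by (cases t) auto
lemma pars_ren: "pars (ren \<rho> \<phi>) = pars \<phi>"
  by (induction \<phi>) (auto simp: tpars_tren)
lemma tfv_tren: "tfv (tren \<rho> t) = \<rho> ` tfv t" by (cases t) auto
lemma fv_ren: "inj \<rho> \<Longrightarrow> fv (ren \<rho> \<phi>) = \<rho> ` fv \<phi>"
  by (induction \<phi>) (auto simp: tfv_tren image_set_diff image_Union inj_eq)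

fun tsub :: "(nat \<Rightarrow> 'a option) \<Rightarrow> 'a trm \<Rightarrow> 'a trm" where
  "tsub \<sigma> (Var i) = (case \<sigma> i of Some a \<Rightarrow> Par a | None \<Rightarrow> Var i)"
| "tsub \<sigma> (Par a) = Par a"

fun psub :: "(nat \<Rightarrow> 'a option) \<Rightarrow> ('r,'a) fm \<Rightarrow> ('r,'a) fm" where
  "psub \<sigma> (Eq s t) = Eq (tsub \<sigma> s) (tsub \<sigma> t)"
| "psub \<sigma> (Rel R ts) = Rel R (map (tsub \<sigma>) ts)"
| "psub \<sigma> (Neg \<phi>) = Neg (psub \<sigma> \<phi>)"
| "psub \<sigma> (Conj \<phi> \<psi>) = Conj (psub \<sigma> \<phi>) (psub \<sigma> \<psi>)"
| "psub \<sigma> (Ex i \<phi>) = Ex i (psub (\<sigma>(i := None)) \<phi>)"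

definition ov :: "(nat \<Rightarrow> 'a) \<Rightarrow> (nat \<Rightarrow> 'a option) \<Rightarrow> nat \<Rightarrow> 'a" where
  "ov e \<sigma> i = (case \<sigma> i of Some a \<Rightarrow> a | None \<Rightarrow> e i)"

lemma tval_tsub: "tval e (tsub \<sigma> t) = tval (ov e \<sigma>) t"
  by (cases t) (auto simp: ov_def split: option.splits)

lemma sat_psub: "sat I e (psub \<sigma> \<phi>) = sat I (ov e \<sigma>) \<phi>"
proof (induction \<phi> arbitrary: e \<sigma>)
  case (Ex i \<phi>)
  have eq: "\<And>a. ov (e(i := a)) (\<sigma>(i := None)) = (ov e \<sigma>)(i := a)"
    by (auto simp: fun_eq_iff ov_def split: option.splits)
  have "sat I e (psub \<sigma> (Ex i \<phi>)) = (\<exists>a. sat I (ov (e(i := a)) (\<sigma>(i := None))) \<phi>)"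
    by (simp only: psub.simps sat.simps Ex.IH)
  also have "\<dots> = (\<exists>a. sat I ((ov e \<sigma>)(i := a)) \<phi>)" by (simp only: eq)
  finally show ?case by (simp only: sat.simps)
qed (auto simp: tval_tsub comp_def)

lemma tfv_tsub: "tfv (tsub \<sigma> t) \<subseteq> tfv t - {i. \<sigma> i \<noteq> None}"
  by (cases t) (auto split: option.splits)
lemma fv_psub: "fv (psub \<sigma> \<phi>) \<subseteq> fv \<phi> - {i. \<sigma> i \<noteq> None}"
proof (induction \<phi> arbitrary: \<sigma>)
  case (Eq s t) then show ?case using tfv_tsub[of \<sigma> s] tfv_tsub[of \<sigma> t] by auto
next
  case (Rel R ts) then show ?case using tfv_tsub[of \<sigma>] by fastforce
next
  case (Ex i \<phi>)
  have "fv (psub (\<sigma>(i := None)) \<phi>) \<subseteq> fv \<phi> - {j. (\<sigma>(i:=None)) j \<noteq> None}" by (rule Ex.IH)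
  then show ?case by auto
next
  case (Conj \<phi>1 \<phi>2) show ?case using Conj.IH(1)[of \<sigma>] Conj.IH(2)[of \<sigma>] by auto
qed auto

lemma tpars_tsub: "tpars (tsub \<sigma> t) \<subseteq> tpars t \<union> {a. \<exists>i. \<sigma> i = Some a}"
  by (cases t) (auto split: option.splits)
lemma pars_psub: "pars (psub \<sigma> \<phi>) \<subseteq> pars \<phi> \<union> {a. \<exists>i. \<sigma> i = Some a}"
proof (induction \<phi> arbitrary: \<sigma>)
  case (Eq s t) then show ?case using tpars_tsub[of \<sigma> s] tpars_tsub[of \<sigma> t] by auto
next
  case (Rel R ts) then show ?case using tpars_tsub[of \<sigma>] by fastforce
next
  case (Ex i \<phi>)
  have "pars (psub (\<sigma>(i := None)) \<phi>) \<subseteq> pars \<phi> \<union> {a. \<exists>j. (\<sigma>(i:=None)) j = Some a}" by (rule Ex.IH)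
  then show ?case by (auto split: if_splits)
next
  case (Conj \<phi>1 \<phi>2) show ?case using Conj.IH(1)[of \<sigma>] Conj.IH(2)[of \<sigma>] by auto
qed auto

lemma tval_cong: "(\<forall>i\<in>tfv t. e i = e' i) \<Longrightarrow> tval e t = tval e' t"
  by (cases t) auto

lemma sat_cong: "(\<forall>i\<in>fv \<phi>. e i = e' i) \<Longrightarrow> sat I e \<phi> = sat I e' \<phi>"
proof (induction \<phi> arbitrary: e e')
  case (Eq s t) then show ?case using tval_cong[of s e e'] tval_cong[of t e e'] by auto
next
  case (Rel R ts)
  have "\<forall>x\<in>set ts. tval e x = tval e' x"
    using Rel.prems by (auto intro!: tval_cong)
  then have "map (tval e) ts = map (tval e') ts" by (metis map_eq_conv)
  then show ?case by (metis sat.simps(2))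
next
  case (Ex i \<phi>)
  have "\<And>a. sat I (e(i:=a)) \<phi> = sat I (e'(i:=a)) \<phi>"
    using Ex by (intro Ex.IH) auto
  then show ?case by simp
next
  case (Conj \<phi>1 \<phi>2)
  have "sat I e \<phi>1 = sat I e' \<phi>1" using Conj.prems by (intro Conj.IH(1)) auto
  moreover have "sat I e \<phi>2 = sat I e' \<phi>2" using Conj.prems by (intro Conj.IH(2)) auto
  ultimately show ?case by simp
qed auto

fun exs :: "nat list \<Rightarrow> ('r,'a) fm \<Rightarrow> ('r,'a) fm" where
  "exs [] \<phi> = \<phi>" | "exs (v # vs) \<phi> = Ex v (exs vs \<phi>)"

lemma sat_exs: "sat I e (exs vs \<phi>) = (\<exists>g. sat I (\<lambda>i. if i \<in> set vs then g i else e i) \<phi>)"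
proof (induction vs arbitrary: e)
  case Nil then show ?case by simp
next
  case (Cons v vs)
  show ?case
  proof
    assume "sat I e (exs (v # vs) \<phi>)"
    then obtain a g where ag: "sat I (\<lambda>i. if i \<in> set vs then g i else (e(v:=a)) i) \<phi>"
      using Cons by auto
    define g' where "g' = (\<lambda>i. if i \<in> set vs then g i else a)"
    have "(\<lambda>i. if i \<in> set vs then g i else (e(v:=a)) i) = (\<lambda>i. if i \<in> set (v # vs) then g' i else e i)"
      by (auto simp: fun_eq_iff g'_def)
    then show "\<exists>g. sat I (\<lambda>i. if i \<in> set (v # vs) then g i else e i) \<phi>"
      using ag by metis
  next
    assume "\<exists>g. sat I (\<lambda>i. if i \<in> set (v # vs) then g i else e i) \<phi>"
    then obtain g where g: "sat I (\<lambda>i. if i \<in> set (v # vs) then g i else e i) \<phi>" by blast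
    have "(\<lambda>i. if i \<in> set (v # vs) then g i else e i) = (\<lambda>i. if i \<in> set vs then g i else (e(v:= g v)) i)"
      by (auto simp: fun_eq_iff)
    then have "sat I (\<lambda>i. if i \<in> set vs then g i else (e(v:= g v)) i) \<phi>"
      using g by metis
    then show "sat I e (exs (v # vs) \<phi>)" using Cons by auto
  qed
qed

lemma fv_exs: "fv (exs vs \<phi>) = fv \<phi> - set vs"
  by (induction vs) auto
lemma pars_exs: "pars (exs vs \<phi>) = pars \<phi>"
  by (induction vs) auto

definition TT :: "('r,'a) fm" where "TT = Ex 0 (Eq (Var 0) (Var 0))"
lemma sat_TT[simp]: "sat I e TT" by (simp add: TT_def)
lemma fv_TT[simp]: "fv TT = {}" by (simp add: TT_def)
lemma pars_TT[simp]: "pars TT = {}" by (simp add: TT_def)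

fun Conjs :: "('r,'a) fm list \<Rightarrow> ('r,'a) fm" where
  "Conjs [] = TT" | "Conjs (\<phi> # l) = Conj \<phi> (Conjs l)"

lemma sat_Conjs: "sat I e (Conjs l) = (\<forall>\<phi>\<in>set l. sat I e \<phi>)"
  by (induction l) auto
lemma fv_Conjs: "fv (Conjs l) = (\<Union>\<phi>\<in>set l. fv \<phi>)"
  by (induction l) auto
lemma pars_Conjs: "pars (Conjs l) = (\<Union>\<phi>\<in>set l. pars \<phi>)"
  by (induction l) auto

fun allv :: "('r,'a) fm \<Rightarrow> nat set" where
  "allv (Eq s t) = tfv s \<union> tfv t"
| "allv (Rel R ts) = (\<Union>t\<in>set ts. tfv t)"
| "allv (Neg \<phi>) = allv \<phi>"
| "allv (Conj \<phi> \<psi>) = allv \<phi> \<union> allv \<psi>"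
| "allv (Ex i \<phi>) = insert i (allv \<phi>)"

lemma finite_tfv: "finite (tfv t)" by (cases t) auto
lemma finite_allv: "finite (allv \<phi>)" by (induction \<phi>) (auto simp: finite_tfv)
lemma fv_allv: "fv \<phi> \<subseteq> allv \<phi>" by (induction \<phi>) auto

definition fresh :: "('r,'a) fm \<Rightarrow> nat \<Rightarrow> nat" where
  "fresh \<phi> k = Suc (Max (insert k (allv \<phi>)))"

lemma fresh_gt: "i \<in> allv \<phi> \<Longrightarrow> i < fresh \<phi> k" "k < fresh \<phi> k"
  unfolding fresh_def using finite_allv[of \<phi>]
  by (auto simp: le_imp_less_Suc)

definition inst_var :: "nat \<Rightarrow> nat \<Rightarrow> ('r,'a) fm \<Rightarrow> ('r,'a) fm" where
  "inst_var k j \<phi> = Ex k (Conj (Eq (Var k) (Var j)) \<phi>)"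

lemma sat_inst_var: "j \<noteq> k \<Longrightarrow> sat I e (inst_var k j \<phi>) = sat I (e(k := e j)) \<phi>"
  by (auto simp: inst_var_def)
lemma fv_inst_var: "fv (inst_var k j \<phi>) \<subseteq> insert j (fv \<phi> - {k})"
  by (auto simp: inst_var_def)
lemma pars_inst_var: "pars (inst_var k j \<phi>) = pars \<phi>"
  by (auto simp: inst_var_def)

definition atleast :: "nat \<Rightarrow> ('r,'a) fm \<Rightarrow> nat \<Rightarrow> ('r,'a) fm" where
  "atleast M \<chi> k = exs [fresh \<chi> k..<fresh \<chi> k + M]
     (Conj (Conjs [Neg (Eq (Var (fresh \<chi> k + s)) (Var (fresh \<chi> k + t))). s \<leftarrow> [0..<M], t \<leftarrow> [0..<M], s \<noteq> t])
           (Conjs [inst_var k (fresh \<chi> k + t) \<chi>. t \<leftarrow> [0..<M]]))"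

lemma fv_atleast: "fv (atleast M \<chi> k) \<subseteq> fv \<chi> - {k}"
proof -
  let ?K = "fresh \<chi> k"
  have "fv (inst_var k (?K + t) \<chi>) \<subseteq> insert (?K + t) (fv \<chi> - {k})" for t
    by (rule fv_inst_var)
  then show ?thesis
    unfolding atleast_def fv_exs by (fastforce simp: fv_Conjs)
qed

lemma pars_atleast: "pars (atleast M \<chi> k) \<subseteq> pars \<chi>"
  unfolding atleast_def pars_exs by (auto simp: pars_Conjs pars_inst_var)

lemma sat_atleast: "sat I e (atleast M \<chi> k) =
   (\<exists>S. finite S \<and> card S = M \<and> (\<forall>a\<in>S. sat I (e(k:=a)) \<chi>))"
proof -
  let ?K = "fresh \<chi> k"
  have Kgt: "\<And>i. i \<in> fv \<chi> \<Longrightarrow> i < ?K" using fresh_gt(1) fv_allv by blast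
  have kK: "k < ?K" by (rule fresh_gt(2))
  define body where "body = Conj (Conjs [Neg (Eq (Var (?K + s)) (Var (?K + t))). s \<leftarrow> [0..<M], t \<leftarrow> [0..<M], s \<noteq> t])
           (Conjs [inst_var k (?K + t) \<chi>. t \<leftarrow> [0..<M]])"
  have key: "sat I (\<lambda>i. if i \<in> set [?K..<?K+M] then g i else e i) body =
     ((\<forall>s<M. \<forall>t<M. s \<noteq> t \<longrightarrow> g (?K+s) \<noteq> g (?K+t)) \<and> (\<forall>t<M. sat I (e(k := g (?K+t))) \<chi>))" for g
  proof -
    let ?e = "\<lambda>i. if i \<in> set [?K..<?K+M] then g i else e i"
    have 1: "sat I (?e(k := ?e (?K + t))) \<chi> = sat I (e(k := g (?K+t))) \<chi>" if "t < M" for t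
    proof (intro sat_cong ballI)
      fix i assume "i \<in> fv \<chi>"
      then have "i < ?K" by (rule Kgt)
      then show "(?e(k := ?e (?K + t))) i = (e(k := g (?K+t))) i" using kK that by auto
    qed
    have 2: "sat I ?e (inst_var k (?K + t) \<chi>) = sat I (?e(k := ?e (?K + t))) \<chi>" for t
      using kK by (intro sat_inst_var) auto
    show ?thesis unfolding body_def using 1 2
      by (auto simp: sat_Conjs)
  qed
  have "sat I e (atleast M \<chi> k) = (\<exists>g. (\<forall>s<M. \<forall>t<M. s \<noteq> t \<longrightarrow> g (?K+s) \<noteq> g (?K+t)) \<and> (\<forall>t<M. sat I (e(k := g (?K+t))) \<chi>))"
    unfolding atleast_def sat_exs using key[unfolded body_def] by simp
  also have "\<dots> = (\<exists>S. finite S \<and> card S = M \<and> (\<forall>a\<in>S. sat I (e(k:=a)) \<chi>))"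
  proof
    assume "\<exists>g. (\<forall>s<M. \<forall>t<M. s \<noteq> t \<longrightarrow> g (?K+s) \<noteq> g (?K+t)) \<and> (\<forall>t<M. sat I (e(k := g (?K+t))) \<chi>)"
    then obtain g where g1: "\<forall>s<M. \<forall>t<M. s \<noteq> t \<longrightarrow> g (?K+s) \<noteq> g (?K+t)"
      and g2: "\<forall>t<M. sat I (e(k := g (?K+t))) \<chi>" by blast
    have "inj_on (\<lambda>t. g (?K+t)) {..<M}" using g1 by (auto simp: inj_on_def)
    then have "card ((\<lambda>t. g (?K+t)) ` {..<M}) = M" by (simp add: card_image)
    then show "\<exists>S. finite S \<and> card S = M \<and> (\<forall>a\<in>S. sat I (e(k:=a)) \<chi>)"
      using g2 by (intro exI[of _ "(\<lambda>t. g (?K+t)) ` {..<M}"]) auto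
  next
    assume "\<exists>S. finite S \<and> card S = M \<and> (\<forall>a\<in>S. sat I (e(k:=a)) \<chi>)"
    then obtain S where S: "finite S" "card S = M" "\<forall>a\<in>S. sat I (e(k:=a)) \<chi>" by blast
    obtain xs where xs: "distinct xs" "set xs = S" using finite_distinct_list[OF S(1)] by blast
    have lxs: "length xs = M" using xs S(2) distinct_card by fastforce
    show "\<exists>g. (\<forall>s<M. \<forall>t<M. s \<noteq> t \<longrightarrow> g (?K+s) \<noteq> g (?K+t)) \<and> (\<forall>t<M. sat I (e(k := g (?K+t))) \<chi>)"
      using xs lxs S(3)
      by (intro exI[of _ "\<lambda>i. xs ! (i - ?K)"]) (auto simp: nth_eq_iff_index_eq)
  qed
  finally show ?thesis .
qed

lemma atleast_finite:
  assumes "\<not> sat I e (atleast (Suc N) \<chi> k)"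
  shows "finite {a. sat I (e(k:=a)) \<chi>}"
proof (rule ccontr)
  assume "infinite {a. sat I (e(k:=a)) \<chi>}"
  then obtain S where "S \<subseteq> {a. sat I (e(k:=a)) \<chi>}" "finite S" "card S = Suc N"
    using infinite_arbitrarily_large by blast
  then show False using assms by (auto simp: sat_atleast)
qed

lemma atleast_card:
  assumes "sat I e (atleast M \<chi> k)" "finite {a. sat I (e(k:=a)) \<chi>}"
  shows "M \<le> card {a. sat I (e(k:=a)) \<chi>}"
proof -
  obtain S where "finite S" "card S = M" "\<forall>a\<in>S. sat I (e(k:=a)) \<chi>"
    using assms(1) by (auto simp: sat_atleast)
  then show ?thesis using assms(2) card_mono[of _ S] by (metis mem_Collect_eq subsetI)
qed

fun tpab :: "'a \<Rightarrow> nat \<Rightarrow> 'a trm \<Rightarrow> 'a trm" where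
  "tpab d j (Var i) = Var i" | "tpab d j (Par a) = (if a = d then Var j else Par a)"

fun pab :: "'a \<Rightarrow> nat \<Rightarrow> ('r,'a) fm \<Rightarrow> ('r,'a) fm" where
  "pab d j (Eq s t) = Eq (tpab d j s) (tpab d j t)"
| "pab d j (Rel R ts) = Rel R (map (tpab d j) ts)"
| "pab d j (Neg \<phi>) = Neg (pab d j \<phi>)"
| "pab d j (Conj \<phi> \<psi>) = Conj (pab d j \<phi>) (pab d j \<psi>)"
| "pab d j (Ex i \<phi>) = Ex i (pab d j \<phi>)"

lemma tval_tpab: "e j = d \<Longrightarrow> tval e (tpab d j t) = tval e t"
  by (cases t) auto

lemma sat_pab: "j \<notin> allv \<phi> \<Longrightarrow> e j = d \<Longrightarrow> sat I e (pab d j \<phi>) = sat I e \<phi>"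
proof (induction \<phi> arbitrary: e)
  case (Rel R ts)
  then have "map (tval e \<circ> tpab d j) ts = map (tval e) ts" by (auto simp: tval_tpab)
  then show ?case by (metis pab.simps(2) sat.simps(2) map_map)
next
  case (Ex i \<phi>)
  then have "\<And>a. sat I (e(i:=a)) (pab d j \<phi>) = sat I (e(i:=a)) \<phi>" by (intro Ex.IH) auto
  then show ?case by simp
qed (auto simp: tval_tpab)

lemma pars_pab: "pars (pab d j \<phi>) \<subseteq> pars \<phi> - {d}"
proof (induction \<phi>)
  case (Eq s t) then show ?case by (cases s; cases t) auto
next
  case (Rel R ts)
  have "tpars (tpab d j t) \<subseteq> tpars t - {d}" for t by (cases t) auto
  then show ?case by fastforce
qed auto

lemma fv_pab: "fv (pab d j \<phi>) \<subseteq> insert j (fv \<phi>)"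
proof (induction \<phi>)
  case (Eq s t) then show ?case by (cases s; cases t) auto
next
  case (Rel R ts)
  have "tfv (tpab d j t) \<subseteq> insert j (tfv t)" for t by (cases t) auto
  then show ?case by fastforce
qed auto

section \<open>acl basics\<close>

lemma tuples1_eq: "xs \<in> tuples 1 \<longleftrightarrow> (\<exists>a. xs = [a])"
  by (auto simp: tuples_def length_Suc_conv)

lemma env_single_fv:
  assumes "fv \<theta> \<subseteq> {0}" shows "sat I (e(0 := a)) \<theta> = sat I (env [a]) \<theta>"
  using assms by (intro sat_cong) (auto simp: env_def)

lemma acl_iff: "b \<in> acl I A \<longleftrightarrow> (\<exists>\<theta>. pars \<theta> \<subseteq> A \<and> fv \<theta> \<subseteq> {0} \<and>
    finite {a. sat I (env [a]) \<theta>} \<and> sat I (env [b]) \<theta>)"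
proof
  assume "b \<in> acl I A"
  then obtain X where X: "defbl I A X" "X \<subseteq> tuples 1" "finite X" "[b] \<in> X"
    unfolding acl_def by blast
  then obtain n \<phi> where \<phi>: "pars \<phi> \<subseteq> A" "fv \<phi> \<subseteq> {..<n}" "X = {xs \<in> tuples n. sat I (env xs) \<phi>}"
    unfolding defbl_def by blast
  have n: "n = 1" using X(4) \<phi>(3) by (auto simp: tuples_def)
  have "{a. sat I (env [a]) \<phi>} = (\<lambda>a. [a]) -` X" using \<phi>(3) n by (auto simp: tuples_def)
  then have "finite {a. sat I (env [a]) \<phi>}" using X(3) by (metis finite_vimageI inj_def list.inject)
  then show "\<exists>\<theta>. pars \<theta> \<subseteq> A \<and> fv \<theta> \<subseteq> {0} \<and> finite {a. sat I (env [a]) \<theta>} \<and> sat I (env [b]) \<theta>"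
    using \<phi> n X(4) by (intro exI[of _ \<phi>]) auto
next
  assume "\<exists>\<theta>. pars \<theta> \<subseteq> A \<and> fv \<theta> \<subseteq> {0} \<and> finite {a. sat I (env [a]) \<theta>} \<and> sat I (env [b]) \<theta>"
  then obtain \<theta> where \<theta>: "pars \<theta> \<subseteq> A" "fv \<theta> \<subseteq> {0}" "finite {a. sat I (env [a]) \<theta>}" "sat I (env [b]) \<theta>"
    by blast
  define X where "X = {xs \<in> tuples 1. sat I (env xs) \<theta>}"
  have "defbl I A X" unfolding defbl_def X_def using \<theta> by (intro exI[of _ 1] exI[of _ \<theta>]) auto
  moreover have "X = (\<lambda>a. [a]) ` {a. sat I (env [a]) \<theta>}" unfolding X_def by (auto simp: tuples_def length_Suc_conv)
  ultimately show "b \<in> acl I A" unfolding acl_def using \<theta>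
    by (intro CollectI exI[of _ X]) (auto simp: X_def tuples_def)
qed

lemma acl_mono: "A \<subseteq> B \<Longrightarrow> acl I A \<subseteq> acl I B"
proof
  fix b assume "A \<subseteq> B" "b \<in> acl I A"
  then show "b \<in> acl I B" unfolding acl_iff by (meson order_trans)
qed

lemma acl_base: "a \<in> A \<Longrightarrow> a \<in> acl I A"
  unfolding acl_iff
  by (intro exI[of _ "Eq (Var 0) (Par a)"]) (auto simp: env_def)

lemma acl_trans1:
  assumes b: "b \<in> acl I (insert d C)" and d: "d \<in> acl I C"
  shows "b \<in> acl I C"
proof -
  obtain \<phi> where \<phi>: "pars \<phi> \<subseteq> insert d C" "fv \<phi> \<subseteq> {0}" "finite {a. sat I (env [a]) \<phi>}" "sat I (env [b]) \<phi>"
    using b unfolding acl_iff by blast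
  obtain \<psi> where \<psi>: "pars \<psi> \<subseteq> C" "fv \<psi> \<subseteq> {0}" "finite {a. sat I (env [a]) \<psi>}" "sat I (env [d]) \<psi>"
    using d unfolding acl_iff by blast
  define j where "j = fresh \<phi> 0"
  have j: "j \<notin> allv \<phi>" "j \<noteq> 0" using fresh_gt(1)[where \<phi>=\<phi> and k=0] fresh_gt(2)[where \<phi>=\<phi> and k=0] unfolding j_def by fastforce+
  define \<phi>j where "\<phi>j = pab d j \<phi>"
  define N where "N = card {a. sat I (env [a]) \<phi>}"
  define \<Theta> where "\<Theta> = Ex j (Conj (inst_var 0 j \<psi>) (Conj \<phi>j (Neg (atleast (Suc N) \<phi>j 0))))"
  have parsT: "pars \<Theta> \<subseteq> C"
    using \<psi>(1) \<phi>(1) pars_pab[of d j \<phi>] pars_atleast[of "Suc N" \<phi>j 0]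
    unfolding \<Theta>_def \<phi>j_def by (auto simp: pars_inst_var)
  have fvT: "fv \<Theta> \<subseteq> {0}"
    using \<psi>(2) \<phi>(2) fv_pab[of d j \<phi>] fv_atleast[of "Suc N" \<phi>j 0] fv_inst_var[of 0 j \<psi>]
    unfolding \<Theta>_def \<phi>j_def by auto
  have envj: "(env [a])(j := y, 0 := c) = (env [c])(j := y)" for a y c
    using j(2) by (auto simp: fun_eq_iff env_def)
  have phij: "sat I ((env [c])(j := d)) \<phi>j = sat I (env [c]) \<phi>" for c
  proof -
    have "sat I ((env [c])(j := d)) \<phi>j = sat I ((env [c])(j := d)) \<phi>"
      unfolding \<phi>j_def by (rule sat_pab[OF j(1)]) simp
    also have "\<dots> = sat I (env [c]) \<phi>" using \<phi>(2) j(2) by (intro sat_cong) auto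
    finally show ?thesis .
  qed
  have psij: "sat I (e) (inst_var 0 j \<psi>) = sat I (env [e j]) \<psi>" for e
    using sat_inst_var[where j=j and k=0 and I=I and e=e and \<phi>=\<psi>] j(2) env_single_fv[OF \<psi>(2)] by simp
  have "sat I (env [b]) \<Theta>"
  proof -
    let ?e = "(env [b])(j := d)"
    have "sat I ?e (inst_var 0 j \<psi>)" using psij \<psi>(4) by simp
    moreover have "sat I ?e \<phi>j" using phij \<phi>(4) by simp
    moreover have "\<not> sat I ?e (atleast (Suc N) \<phi>j 0)"
    proof
      assume "sat I ?e (atleast (Suc N) \<phi>j 0)"
      then obtain S where S: "finite S" "card S = Suc N" "\<forall>a\<in>S. sat I (?e(0:=a)) \<phi>j"
        by (auto simp: sat_atleast)
      have "?e(0:=a) = (env [a])(j := d)" for a using envj[of b d a] by simp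
      then have "S \<subseteq> {a. sat I (env [a]) \<phi>}" using S(3) phij by auto
      then have "card S \<le> N" unfolding N_def using \<phi>(3) card_mono by blast
      then show False using S(2) by simp
    qed
    ultimately show ?thesis unfolding \<Theta>_def by (auto intro!: exI[of _ d])
  qed
  moreover have "finite {a. sat I (env [a]) \<Theta>}"
  proof -
    define T where "T y = {c. sat I ((env [c])(j := y)) \<phi>j}" for y
    have "{a. sat I (env [a]) \<Theta>} \<subseteq> (\<Union>y\<in>{a. sat I (env [a]) \<psi>}. if finite (T y) then T y else {})"
    proof
      fix a assume "a \<in> {a. sat I (env [a]) \<Theta>}"
      then obtain y where y1: "sat I ((env [a])(j := y)) (inst_var 0 j \<psi>)"
        and y2: "sat I ((env [a])(j := y)) \<phi>j" and y3: "\<not> sat I ((env [a])(j := y)) (atleast (Suc N) \<phi>j 0)"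
        unfolding \<Theta>_def by auto
      have "finite {c. sat I ((env [a])(j := y, 0 := c)) \<phi>j}" by (rule atleast_finite[OF y3])
      then have "finite (T y)" unfolding T_def envj .
      moreover have "sat I (env [y]) \<psi>" using y1 psij by simp
      moreover have "a \<in> T y" using y2 by (simp add: T_def)
      ultimately show "a \<in> (\<Union>y\<in>{a. sat I (env [a]) \<psi>}. if finite (T y) then T y else {})" by auto
    qed
    moreover have "finite (\<Union>y\<in>{a. sat I (env [a]) \<psi>}. if finite (T y) then T y else {})"
      using \<psi>(3) by auto
    ultimately show ?thesis by (rule finite_subset)
  qed
  ultimately show ?thesis unfolding acl_iff using parsT fvT by blast
qed

lemma acl_trans_fin:
  assumes "finite F" "F \<subseteq> acl I C"
  shows "acl I (C \<union> F) \<subseteq> acl I C"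
  using assms
proof (induction F rule: finite_induct)
  case empty then show ?case by simp
next
  case (insert x F)
  have "acl I (C \<union> insert x F) \<subseteq> acl I (C \<union> F)"
  proof
    fix b assume "b \<in> acl I (C \<union> insert x F)"
    then have "b \<in> acl I (insert x (C \<union> F))" by simp
    moreover have "x \<in> acl I (C \<union> F)" using insert.prems acl_mono[of C "C \<union> F" I] by auto
    ultimately show "b \<in> acl I (C \<union> F)" by (rule acl_trans1)
  qed
  then show ?case using insert by auto
qed

lemma acl_trans_set:
  assumes "finite M" "M \<subseteq> acl I (C \<union> M')"
  shows "acl I (C \<union> M) \<subseteq> acl I (C \<union> M')"
proof -
  have "acl I (C \<union> M) \<subseteq> acl I ((C \<union> M') \<union> M)" by (rule acl_mono) auto
  also have "\<dots> \<subseteq> acl I (C \<union> M')" by (rule acl_trans_fin[OF assms])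
  finally show ?thesis .
qed

lemma dimset_finite: "finite {card B | B. B \<subseteq> set a \<and> acl_indep I A B}"
proof -
  have "{card B | B. B \<subseteq> set a \<and> acl_indep I A B} \<subseteq> card ` Pow (set a)" by auto
  then show ?thesis by (rule finite_subset) simp
qed

lemma dimset_ne: "0 \<in> {card B | B. B \<subseteq> set a \<and> acl_indep I A B}"
  by (auto simp: acl_indep_def intro!: exI[of _ "{}"])

lemma dim_tp_ge: "B \<subseteq> set a \<Longrightarrow> acl_indep I A B \<Longrightarrow> int (card B) \<le> dim_tp I a A"
proof -
  assume "B \<subseteq> set a" "acl_indep I A B"
  then have "card B \<in> {card B | B. B \<subseteq> set a \<and> acl_indep I A B}" by blast
  then have "card B \<le> Max {card B | B. B \<subseteq> set a \<and> acl_indep I A B}"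
    by (rule Max_ge[OF dimset_finite])
  then show ?thesis unfolding dim_tp_def by simp
qed

lemma dim_tp_obtain: "\<exists>B\<subseteq>set a. acl_indep I A B \<and> dim_tp I a A = int (card B)"
proof -
  have "Max {card B | B. B \<subseteq> set a \<and> acl_indep I A B} \<in> {card B | B. B \<subseteq> set a \<and> acl_indep I A B}"
    using dimset_finite[of a I A] dimset_ne[of a I A] by (intro Max_in) auto
  then show ?thesis unfolding dim_tp_def by auto
qed

lemma dim_tp_le: "dim_tp I a A \<le> int (length a)"
proof -
  obtain B where "B \<subseteq> set a" "dim_tp I a A = int (card B)" using dim_tp_obtain[where a=a and I=I and A=A] by blast
  moreover have "card B \<le> length a" using calculation(1) card_mono[of "set a" B] card_length[of a] by auto
  ultimately show ?thesis by simp
qed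

lemma dim_tp_nonneg: "0 \<le> dim_tp I a A"
  unfolding dim_tp_def by simp

lemma dim_tp_mono_set: "set a \<subseteq> set a' \<Longrightarrow> dim_tp I a A \<le> dim_tp I a' A"
proof -
  assume "set a \<subseteq> set a'"
  moreover obtain B where "B \<subseteq> set a" "acl_indep I A B" "dim_tp I a A = int (card B)"
    using dim_tp_obtain[where a=a and I=I and A=A] by blast
  ultimately show ?thesis using dim_tp_ge[of B a' I A] by auto
qed

lemma acl_indep_anti: "A \<subseteq> A' \<Longrightarrow> acl_indep I A' B \<Longrightarrow> acl_indep I A B"
  unfolding acl_indep_def
proof (intro ballI)
  fix b assume "A \<subseteq> A'" "\<forall>b\<in>B. b \<notin> acl I (A' \<union> (B - {b}))" "b \<in> B"
  moreover have "acl I (A \<union> (B - {b})) \<subseteq> acl I (A' \<union> (B - {b}))"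
    using calculation(1) by (intro acl_mono) auto
  ultimately show "b \<notin> acl I (A \<union> (B - {b}))" by blast
qed

lemma dim_tp_anti: "A \<subseteq> A' \<Longrightarrow> dim_tp I a A' \<le> dim_tp I a A"
proof -
  assume "A \<subseteq> A'"
  moreover obtain B where "B \<subseteq> set a" "acl_indep I A' B" "dim_tp I a A' = int (card B)"
    using dim_tp_obtain[where a=a and I=I and A=A'] by blast
  ultimately show ?thesis using dim_tp_ge[of B a I A] acl_indep_anti[of A A' I B] by simp
qed

section \<open>Matroid facts\<close>

lemma exch: "acl_exchange I \<Longrightarrow> b \<in> acl I (insert c A) \<Longrightarrow> b \<notin> acl I A \<Longrightarrow> c \<in> acl I (insert b A)"
  unfolding acl_exchange_def by blast

lemma steinitz:
  assumes ex: "acl_exchange I"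
  shows "finite M \<Longrightarrow> finite B \<Longrightarrow> acl_indep I C B \<Longrightarrow> B \<subseteq> acl I (C \<union> M) \<Longrightarrow> card B \<le> card M"
proof (induction "card (M - B)" arbitrary: M rule: less_induct)
  case less
  show ?case
  proof (cases "M \<subseteq> B")
    case True
    have "B \<subseteq> M"
    proof
      fix b assume b: "b \<in> B"
      show "b \<in> M"
      proof (rule ccontr)
        assume "b \<notin> M"
        then have "M \<subseteq> B - {b}" using True by auto
        then have "acl I (C \<union> M) \<subseteq> acl I (C \<union> (B - {b}))" by (intro acl_mono) auto
        then show False using b less.prems(3,4) unfolding acl_indep_def by auto
      qed
    qed
    then show ?thesis using less.prems(1) card_mono by blast
  next
    case False
    then obtain m where m: "m \<in> M" "m \<notin> B" by auto
    show ?thesis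
    proof (cases "B \<subseteq> acl I (C \<union> (M - {m}))")
      case True
      have "card ((M - {m}) - B) < card (M - B)" using m less.prems(1)
        by (intro psubset_card_mono) auto
      moreover have "finite (M - {m})" using less.prems(1) by simp
      ultimately have "card B \<le> card (M - {m})"
        using less.hyps[of "M - {m}"] True less.prems(2,3) by blast
      then show ?thesis using card_Diff1_le[of M m] by linarith
    next
      case False
      then obtain b where b: "b \<in> B" "b \<notin> acl I (C \<union> (M - {m}))" by auto
      have ins: "insert m (C \<union> (M - {m})) = C \<union> M" using m(1) by auto
      have "b \<in> acl I (insert m (C \<union> (M - {m})))" using b(1) less.prems(4) ins by auto
      then have mb: "m \<in> acl I (insert b (C \<union> (M - {m})))"
        using exch[OF ex] b(2) by blast
      define M' where "M' = insert b (M - {m})"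
      have CM': "insert b (C \<union> (M - {m})) = C \<union> M'" by (auto simp: M'_def)
      have "M \<subseteq> acl I (C \<union> M')"
      proof
        fix x assume "x \<in> M"
        show "x \<in> acl I (C \<union> M')"
        proof (cases "x = m")
          case True then show ?thesis using mb CM' by simp
        next
          case False then have "x \<in> C \<union> M'" using \<open>x \<in> M\<close> by (simp add: M'_def)
          then show ?thesis by (rule acl_base)
        qed
      qed
      then have "acl I (C \<union> M) \<subseteq> acl I (C \<union> M')" by (rule acl_trans_set[OF less.prems(1)])
      then have BM': "B \<subseteq> acl I (C \<union> M')" using less.prems(4) by auto
      have "b \<notin> M - {m}" using b(2) acl_base[of b "C \<union> (M - {m})" I] by auto
      moreover have "b \<noteq> m" using m(2) b(1) by auto
      ultimately have bM: "b \<notin> M" by auto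
      have fM': "finite M'" using less.prems(1) by (simp add: M'_def)
      have c1: "card M' = Suc (card (M - {m}))"
        unfolding M'_def using less.prems(1) bM by (intro card_insert_disjoint) auto
      have c2: "card M > 0" using m(1) less.prems(1) card_gt_0_iff by blast
      have cM': "card M' = card M"
        using c1 c2 card_Diff_singleton[OF m(1)] by simp
      have eqMB: "M' - B = (M - B) - {m}" using b(1) by (auto simp: M'_def)
      have "finite (M - B)" using less.prems(1) by simp
      moreover have "m \<in> M - B" using m by simp
      ultimately have "card ((M - B) - {m}) < card (M - B)" by (rule card_Diff1_less)
      then have "card (M' - B) < card (M - B)" by (simp only: eqMB)
      then have "card B \<le> card M'" using less.hyps[of M'] BM' less.prems(2,3) fM' by blast
      then show ?thesis using cM' by simp
    qed
  qed
qed

lemma basis_spans: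
  assumes ex: "acl_exchange I" and MS: "M \<subseteq> S" and fS: "finite S" and iM: "acl_indep I C M"
    and mx: "\<forall>B. B \<subseteq> S \<and> acl_indep I C B \<longrightarrow> card B \<le> card M"
  shows "S \<subseteq> acl I (C \<union> M)"
proof
  fix v assume v: "v \<in> S"
  show "v \<in> acl I (C \<union> M)"
  proof (rule ccontr)
    assume nv: "v \<notin> acl I (C \<union> M)"
    then have vM: "v \<notin> M" using acl_base[of v "C \<union> M" I] by blast
    have "acl_indep I C (insert v M)"
      unfolding acl_indep_def
    proof
      fix x assume x: "x \<in> insert v M"
      show "x \<notin> acl I (C \<union> (insert v M - {x}))"
      proof (cases "x = v")
        case True
        then show ?thesis using nv vM by (simp add: insert_Diff_if)
      next
        case False
        then have xM: "x \<in> M" using x by auto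
        show ?thesis
        proof
          assume "x \<in> acl I (C \<union> (insert v M - {x}))"
          moreover have "C \<union> (insert v M - {x}) = insert v (C \<union> (M - {x}))" using False by auto
          ultimately have "x \<in> acl I (insert v (C \<union> (M - {x})))" by simp
          moreover have "x \<notin> acl I (C \<union> (M - {x}))" using iM xM unfolding acl_indep_def by blast
          ultimately have "v \<in> acl I (insert x (C \<union> (M - {x})))"
            using exch[OF ex] by blast
          moreover have "insert x (C \<union> (M - {x})) = C \<union> M" using xM by auto
          ultimately show False using nv by simp
        qed
      qed
    qed
    then have "card (insert v M) \<le> card M" using mx MS v by auto
    moreover have "finite M" using MS fS finite_subset by blast
    ultimately show False using vM by simp
  qed
qed

lemma dim_tp_append_acl:
  assumes ex: "acl_exchange I" and c: "set c \<subseteq> acl I (C \<union> set u)"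
  shows "dim_tp I (u @ c) C \<le> dim_tp I u C"
proof -
  obtain M where M: "M \<subseteq> set u" "acl_indep I C M" "dim_tp I u C = int (card M)"
    using dim_tp_obtain[where a=u and I=I and A=C] by blast
  have mx: "\<forall>B. B \<subseteq> set u \<and> acl_indep I C B \<longrightarrow> card B \<le> card M"
    using dim_tp_ge M(3) by fastforce
  have span: "set u \<subseteq> acl I (C \<union> M)" by (rule basis_spans[OF ex M(1) _ M(2) mx]) simp
  have "acl I (C \<union> set u) \<subseteq> acl I (C \<union> M)" by (rule acl_trans_set[OF _ span]) simp
  obtain B where B: "B \<subseteq> set (u @ c)" "acl_indep I C B" "dim_tp I (u @ c) C = int (card B)"
    using dim_tp_obtain[where a="u @ c" and I=I and A=C] by blast
  have "B \<subseteq> acl I (C \<union> M)" using B(1) span c \<open>acl I (C \<union> set u) \<subseteq> acl I (C \<union> M)\<close> by auto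
  moreover have "finite M" using M(1) finite_subset by blast
  moreover have "finite B" using B(1) finite_subset by blast
  ultimately have "card B \<le> card M" using steinitz[OF ex] B(2) by blast
  then show ?thesis using M(3) B(3) by simp
qed

lemma seq_indep:
  assumes ex: "acl_exchange I"
  shows "(\<forall>i<length bs. bs ! i \<notin> acl I (C \<union> set (take i bs))) \<Longrightarrow> distinct bs \<and> acl_indep I C (set bs)"
proof (induction bs rule: rev_induct)
  case Nil then show ?case by (simp add: acl_indep_def)
next
  case (snoc b p)
  have "\<forall>i<length p. p ! i \<notin> acl I (C \<union> set (take i p))"
  proof (intro allI impI)
    fix i assume "i < length p"
    then show "p ! i \<notin> acl I (C \<union> set (take i p))"
      using snoc.prems[rule_format, of i] by (simp add: nth_append)
  qed
  then have IH: "distinct p" "acl_indep I C (set p)" using snoc.IH by auto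
  have bp: "b \<notin> acl I (C \<union> set p)" using snoc.prems[rule_format, of "length p"] by simp
  then have bnp: "b \<notin> set p" using acl_base[of b "C \<union> set p" I] by auto
  have "acl_indep I C (insert b (set p))"
    unfolding acl_indep_def
  proof
    fix x assume x: "x \<in> insert b (set p)"
    show "x \<notin> acl I (C \<union> (insert b (set p) - {x}))"
    proof (cases "x = b")
      case True then show ?thesis using bp bnp by (simp add: insert_Diff_if)
    next
      case False
      then have xp: "x \<in> set p" using x by auto
      show ?thesis
      proof
        assume "x \<in> acl I (C \<union> (insert b (set p) - {x}))"
        moreover have "C \<union> (insert b (set p) - {x}) = insert b (C \<union> (set p - {x}))" using False by auto
        ultimately have "x \<in> acl I (insert b (C \<union> (set p - {x})))" by simp
        moreover have "x \<notin> acl I (C \<union> (set p - {x}))" using IH(2) xp unfolding acl_indep_def by blast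
        ultimately have "b \<in> acl I (insert x (C \<union> (set p - {x})))"
          using exch[OF ex] by blast
        moreover have "insert x (C \<union> (set p - {x})) = C \<union> set p" using xp by auto
        ultimately show False using bp by simp
      qed
    qed
  qed
  then show ?case using IH bnp by simp
qed

section \<open>Realizing types\<close>

definition tpeq :: "('r \<Rightarrow> 'a list \<Rightarrow> bool) \<Rightarrow> 'a set \<Rightarrow> 'a list \<Rightarrow> 'a list \<Rightarrow> bool" where
  "tpeq I A t t' \<longleftrightarrow> length t = length t' \<and> (\<forall>\<phi>::('r,'a) fm. pars \<phi> \<subseteq> A \<and> fv \<phi> \<subseteq> {..<length t} \<longrightarrow>
      (sat I (env t) \<phi> \<longleftrightarrow> sat I (env t') \<phi>))"

definition trs :: "'a list \<Rightarrow> nat \<Rightarrow> 'a option" where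
  "trs p i = (if 1 \<le> i \<and> i \<le> length p then Some (p ! (i - 1)) else None)"

definition tr :: "'a list \<Rightarrow> ('r,'a) fm \<Rightarrow> ('r,'a) fm" where
  "tr p \<phi> = Ex (Suc (length p)) (Conj (Eq (Var (Suc (length p))) (Var 0)) (psub (trs p) (ren Suc \<phi>)))"

lemma env_snoc: "(env p)(length p := b) = env (p @ [b])"
  by (auto simp: fun_eq_iff env_def nth_append)

lemma sat_tr: "sat I (env [a]) (tr p \<phi>) = sat I (env (p @ [a])) \<phi>"
proof -
  let ?k = "length p"
  have "sat I (env [a]) (tr p \<phi>) = sat I ((env [a])(Suc ?k := a)) (psub (trs p) (ren Suc \<phi>))"
    by (auto simp: tr_def env_def)
  also have "\<dots> = sat I (ov ((env [a])(Suc ?k := a)) (trs p) \<circ> Suc) \<phi>"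
    by (simp add: sat_psub sat_ren)
  also have "ov ((env [a])(Suc ?k := a)) (trs p) \<circ> Suc = env (p @ [a])"
  proof
    fix i
    show "(ov ((env [a])(Suc ?k := a)) (trs p) \<circ> Suc) i = env (p @ [a]) i"
      by (cases "i < ?k"; cases "i = ?k") (auto simp: ov_def trs_def env_def nth_append)
  qed
  finally show ?thesis .
qed

lemma fv_tr: "fv \<phi> \<subseteq> {..length p} \<Longrightarrow> fv (tr p \<phi>) \<subseteq> {0}"
proof -
  assume a: "fv \<phi> \<subseteq> {..length p}"
  have "fv (psub (trs p) (ren Suc \<phi>)) \<subseteq> fv (ren Suc \<phi>) - {i. trs p i \<noteq> None}" by (rule fv_psub)
  also have "\<dots> \<subseteq> {Suc (length p)}" using a by (auto simp: fv_ren trs_def)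
  finally show ?thesis by (auto simp: tr_def)
qed

lemma pars_tr: "pars (tr p \<phi>) \<subseteq> pars \<phi> \<union> set p"
proof -
  have "pars (psub (trs p) (ren Suc \<phi>)) \<subseteq> pars (ren Suc \<phi>) \<union> {a. \<exists>i. trs p i = Some a}" by (rule pars_psub)
  also have "\<dots> \<subseteq> pars \<phi> \<union> set p"
    by (auto simp: pars_ren trs_def split: if_splits)
  finally show ?thesis by (auto simp: tr_def)
qed

lemma real_step:
  fixes I :: "'r \<Rightarrow> 'a list \<Rightarrow> bool"
  assumes satu: "aleph1_saturated I" and cA: "countable A" and cA0: "countable A0"
    and tp: "tpeq I A p p'"
  shows "\<exists>a. tpeq I A (p @ [b]) (p' @ [a]) \<and> (b \<notin> acl I (A \<union> set p) \<longrightarrow> a \<notin> acl I (A \<union> A0 \<union> set p'))"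
proof -
  define k where "k = length p"
  have lp': "length p' = k" using tp by (simp add: tpeq_def k_def)
  have tpq: "\<And>\<phi>. pars \<phi> \<subseteq> A \<Longrightarrow> fv \<phi> \<subseteq> {..<k} \<Longrightarrow> sat I (env p) \<phi> = sat I (env p') \<phi>"
    using tp by (auto simp: tpeq_def k_def)
  define D where "D = A \<union> A0 \<union> set p'"
  have cD: "countable D" using cA cA0 countable_finite[OF finite_set[of p']] by (simp add: D_def)
  define G where "G = {\<phi>::('r,'a) fm. pars \<phi> \<subseteq> A \<and> fv \<phi> \<subseteq> {..k} \<and> sat I (env (p @ [b])) \<phi>}"
  define T where "T = tr p' ` G"
  define Alg where "Alg = {Neg \<theta> | \<theta>::('r,'a) fm. pars \<theta> \<subseteq> D \<and> fv \<theta> \<subseteq> {0} \<and> finite {a. sat I (env [a]) \<theta>}}"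
  define nalg where "nalg = (b \<notin> acl I (A \<union> set p))"
  define \<Phi> where "\<Phi> = T \<union> (if nalg then Alg else {})"
  have \<Phi>ok: "\<forall>\<phi>\<in>\<Phi>. pars \<phi> \<subseteq> D \<and> fv \<phi> \<subseteq> {0}"
  proof
    fix \<psi> assume "\<psi> \<in> \<Phi>"
    then consider (t) "\<psi> \<in> T" | (al) "\<psi> \<in> Alg" by (auto simp: \<Phi>_def split: if_splits)
    then show "pars \<psi> \<subseteq> D \<and> fv \<psi> \<subseteq> {0}"
    proof cases
      case t
      then obtain \<phi> where "\<phi> \<in> G" "\<psi> = tr p' \<phi>" by (auto simp: T_def)
      then show ?thesis using pars_tr[of p' \<phi>] fv_tr[of \<phi> p'] lp' by (auto simp: G_def D_def)
    next
      case al then show ?thesis by (auto simp: Alg_def)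
    qed
  qed
  have fs: "\<exists>a. \<forall>\<phi>\<in>\<Phi>0. sat I (env [a]) \<phi>" if F: "finite \<Phi>0" "\<Phi>0 \<subseteq> \<Phi>" for \<Phi>0
  proof -
    have "\<Phi>0 \<inter> T \<subseteq> tr p' ` G" by (auto simp: T_def)
    then obtain G0 where G0: "G0 \<subseteq> G" "finite G0" "\<Phi>0 \<inter> T = tr p' ` G0"
      using finite_subset_image[of "\<Phi>0 \<inter> T" "tr p'" G] F(1) by auto
    obtain l where l: "set l = G0" using finite_list[OF G0(2)] by blast
    define \<chi> where "\<chi> = Conjs l"
    have pc: "pars \<chi> \<subseteq> A" using G0(1) l by (auto simp: \<chi>_def pars_Conjs G_def)
    have fc: "fv \<chi> \<subseteq> {..k}" using G0(1) l by (auto simp: \<chi>_def fv_Conjs G_def)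
    have sc: "sat I (env (p @ [b])) \<chi>" using G0(1) l by (auto simp: \<chi>_def sat_Conjs G_def)
    define Sol where "Sol = {a. sat I (env (p' @ [a])) \<chi>}"
    have solT: "\<forall>\<phi>\<in>\<Phi>0 \<inter> T. sat I (env [a]) \<phi>" if "a \<in> Sol" for a
    proof
      fix \<psi> assume "\<psi> \<in> \<Phi>0 \<inter> T"
      then obtain \<phi> where "\<phi> \<in> G0" "\<psi> = tr p' \<phi>" using G0(3) by auto
      then show "sat I (env [a]) \<psi>" using that l by (auto simp: sat_tr Sol_def \<chi>_def sat_Conjs)
    qed
    have fvEx: "fv (Ex k \<chi>) \<subseteq> {..<k}" using fc by auto
    have "sat I (env p) (Ex k \<chi>)" using sc env_snoc[of p b] by (auto simp: k_def intro!: exI[of _ b])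
    then have "sat I (env p') (Ex k \<chi>)" using tpq[OF _ fvEx] pc by simp
    then obtain a0 where "sat I ((env p')(k := a0)) \<chi>" by auto
    then have a0: "a0 \<in> Sol" using env_snoc[of p' a0] lp' by (simp add: Sol_def)
    show ?thesis
    proof (cases nalg)
      case False
      then have "\<Phi>0 \<subseteq> T" using F(2) by (auto simp: \<Phi>_def)
      then show ?thesis using solT[OF a0] by blast
    next
      case True
      have infSol: "infinite Sol"
      proof
        assume fSol: "finite Sol"
        define N0 where "N0 = card Sol"
        have eqp': "{a. sat I ((env p')(k := a)) \<chi>} = Sol" using env_snoc[of p'] lp' by (simp add: Sol_def)
        have "\<not> sat I (env p') (atleast (Suc N0) \<chi> k)"
        proof
          assume "sat I (env p') (atleast (Suc N0) \<chi> k)"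
          then have "Suc N0 \<le> card Sol" using atleast_card[of I "env p'" "Suc N0" \<chi> k] fSol eqp' by simp
          then show False by (simp add: N0_def)
        qed
        moreover have p1: "pars (atleast (Suc N0) \<chi> k) \<subseteq> A" using pc pars_atleast[of "Suc N0" \<chi> k] by (rule order_trans[rotated])
        moreover have f1: "fv (atleast (Suc N0) \<chi> k) \<subseteq> {..<k}" using fc fv_atleast[of "Suc N0" \<chi> k] by fastforce
        ultimately have "\<not> sat I (env p) (atleast (Suc N0) \<chi> k)" using tpq[OF p1 f1] by simp
        then have "finite {a. sat I ((env p)(k := a)) \<chi>}" by (rule atleast_finite)
        then have finp: "finite {a. sat I (env [a]) (tr p \<chi>)}" using env_snoc[of p] by (simp add: sat_tr k_def)
        have "b \<in> acl I (A \<union> set p)" unfolding acl_iff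
          using finp pc pars_tr[of p \<chi>] fv_tr[of \<chi> p] fc sc
          by (intro exI[of _ "tr p \<chi>"]) (auto simp: sat_tr k_def)
        then show False using True by (simp add: nalg_def)
      qed
      define sol where "sol \<psi> = {a. \<not> sat I (env [a]) \<psi>}" for \<psi> :: "('r,'a) fm"
      define E where "E = (\<Union>\<psi>\<in>\<Phi>0 \<inter> Alg. sol \<psi>)"
      have "finite E" unfolding E_def
      proof (rule finite_UN_I)
        show "finite (\<Phi>0 \<inter> Alg)" using F(1) by simp
      next
        fix \<psi> assume "\<psi> \<in> \<Phi>0 \<inter> Alg"
        then obtain \<theta> where "\<psi> = Neg \<theta>" "finite {a. sat I (env [a]) \<theta>}" by (auto simp: Alg_def)
        then show "finite (sol \<psi>)" by (simp add: sol_def)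
      qed
      then have "infinite (Sol - E)" using infSol by (rule Diff_infinite_finite)
      then obtain a where "a \<in> Sol - E" using infinite_imp_nonempty by blast
      then have a: "a \<in> Sol" "a \<notin> E" by auto
      have "\<forall>\<phi>\<in>\<Phi>0. sat I (env [a]) \<phi>"
      proof
        fix \<psi> assume \<psi>: "\<psi> \<in> \<Phi>0"
        then consider "\<psi> \<in> T" | "\<psi> \<in> Alg" using F(2) True by (auto simp: \<Phi>_def)
        then show "sat I (env [a]) \<psi>"
        proof cases
          case 1 then show ?thesis using solT[OF a(1)] \<psi> by blast
        next
          case 2 then show ?thesis using a(2) \<psi> by (auto simp: E_def sol_def)
        qed
      qed
      then show ?thesis by blast
    qed
  qed
  have cond: "countable D \<and> (\<forall>\<phi>\<in>\<Phi>. pars \<phi> \<subseteq> D \<and> fv \<phi> \<subseteq> {0}) \<and>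
      (\<forall>\<Phi>0. finite \<Phi>0 \<and> \<Phi>0 \<subseteq> \<Phi> \<longrightarrow> (\<exists>a. \<forall>\<phi>\<in>\<Phi>0. sat I (env [a]) \<phi>))"
    using cD \<Phi>ok fs by blast
  note H = satu[unfolded aleph1_saturated_def, THEN spec[where x=D], THEN spec[where x=\<Phi>]]
  obtain a where a: "\<forall>\<phi>\<in>\<Phi>. sat I (env [a]) \<phi>"
    using mp[OF H cond] by blast
  have "tpeq I A (p @ [b]) (p' @ [a])"
    unfolding tpeq_def
  proof (intro conjI allI impI)
    show "length (p @ [b]) = length (p' @ [a])" using lp' by (simp add: k_def)
  next
    fix \<phi> :: "('r,'a) fm" assume \<phi>: "pars \<phi> \<subseteq> A \<and> fv \<phi> \<subseteq> {..<length (p @ [b])}"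
    then have \<phi>': "pars \<phi> \<subseteq> A" "fv \<phi> \<subseteq> {..k}" by (auto simp: k_def)
    show "sat I (env (p @ [b])) \<phi> = sat I (env (p' @ [a])) \<phi>"
    proof (cases "sat I (env (p @ [b])) \<phi>")
      case True
      then have "tr p' \<phi> \<in> \<Phi>" using \<phi>' by (auto simp: \<Phi>_def T_def G_def)
      then show ?thesis using a True by (auto simp: sat_tr)
    next
      case False
      then have "tr p' (Neg \<phi>) \<in> \<Phi>" using \<phi>' by (auto simp: \<Phi>_def T_def G_def)
      then show ?thesis using a False by (auto simp: sat_tr)
    qed
  qed
  moreover have "a \<notin> acl I (A \<union> A0 \<union> set p')" if nb: "b \<notin> acl I (A \<union> set p)"
  proof
    assume "a \<in> acl I (A \<union> A0 \<union> set p')"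
    then obtain \<theta> where \<theta>: "pars \<theta> \<subseteq> D" "fv \<theta> \<subseteq> {0}" "finite {a. sat I (env [a]) \<theta>}" "sat I (env [a]) \<theta>"
      unfolding acl_iff D_def by blast
    then have "Neg \<theta> \<in> \<Phi>" using nb by (auto simp: \<Phi>_def Alg_def nalg_def)
    then show False using a \<theta>(4) by auto
  qed
  ultimately show ?thesis by blast
qed

lemma tpeq_nil: "tpeq I A [] []"
  by (simp add: tpeq_def)

lemma realize:
  fixes I :: "'r \<Rightarrow> 'a list \<Rightarrow> bool"
  assumes satu: "aleph1_saturated I" and cA: "countable A" and cA0: "countable A0"
  shows "\<exists>w'. tpeq I A w w' \<and> (\<forall>i<length w. w ! i \<notin> acl I (A \<union> set (take i w)) \<longrightarrow>
            w' ! i \<notin> acl I (A \<union> A0 \<union> set (take i w')))"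
proof (induction w rule: rev_induct)
  case Nil then show ?case using tpeq_nil by auto
next
  case (snoc b p)
  then obtain p' where p': "tpeq I A p p'"
    "\<forall>i<length p. p ! i \<notin> acl I (A \<union> set (take i p)) \<longrightarrow> p' ! i \<notin> acl I (A \<union> A0 \<union> set (take i p'))"
    by blast
  have lp: "length p' = length p" using p'(1) by (simp add: tpeq_def)
  obtain a where a: "tpeq I A (p @ [b]) (p' @ [a])"
    "b \<notin> acl I (A \<union> set p) \<longrightarrow> a \<notin> acl I (A \<union> A0 \<union> set p')"
    using real_step[OF satu cA cA0 p'(1), of b] by blast
  have "\<forall>i<length (p @ [b]). (p @ [b]) ! i \<notin> acl I (A \<union> set (take i (p @ [b]))) \<longrightarrow>
            (p' @ [a]) ! i \<notin> acl I (A \<union> A0 \<union> set (take i (p' @ [a])))"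
  proof (intro allI impI)
    fix i assume i: "i < length (p @ [b])" and ni: "(p @ [b]) ! i \<notin> acl I (A \<union> set (take i (p @ [b])))"
    show "(p' @ [a]) ! i \<notin> acl I (A \<union> A0 \<union> set (take i (p' @ [a])))"
    proof (cases "i < length p")
      case True
      then show ?thesis using p'(2) ni lp by (simp add: nth_append)
    next
      case False
      then have "i = length p" using i by simp
      then show ?thesis using a(2) ni lp by (simp add: nth_append)
    qed
  qed
  then show ?case using a(1) by blast
qed

lemma nth_notin_take: "distinct xs \<Longrightarrow> i < length xs \<Longrightarrow> xs ! i \<notin> set (take i xs)"
  by (metis distinct_take id_take_nth_drop not_distinct_conv_prefix)

lemma env_append_shift: "length bs = e \<Longrightarrow> env (bs @ w) \<circ> (\<lambda>i. i + e) = env w"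
  by (auto simp: fun_eq_iff env_def nth_append)

lemma claimP:
  fixes I :: "'r \<Rightarrow> 'a list \<Rightarrow> bool"
  assumes ex: "acl_exchange I" and satu: "aleph1_saturated I" and cA: "countable A"
    and W: "defbl I A W" and w: "w \<in> W"
  shows "dim_tp I w A \<le> dim I W"
proof -
  obtain N and \<phi>W :: "('r,'a) fm" where \<phi>W: "pars \<phi>W \<subseteq> A" "fv \<phi>W \<subseteq> {..<N}"
    "W = {xs \<in> tuples N. sat I (env xs) \<phi>W}"
    using W unfolding defbl_def by blast
  define A0 where "A0 = (SOME A0. finite A0 \<and> defbl I A0 W)"
  have "finite (pars \<phi>W) \<and> defbl I (pars \<phi>W) W"
    using \<phi>W finite_pars[of \<phi>W] unfolding defbl_def by blast
  then have A0: "finite A0" "defbl I A0 W" unfolding A0_def by (metis (mono_tags, lifting) someI_ex)+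
  have dimW: "dim I W = Max ((\<lambda>a. dim_tp I a A0) ` W)"
    using w unfolding dim_def dim_over_def A0_def by (auto split: if_splits)
  have WN: "\<And>x. x \<in> W \<Longrightarrow> length x = N" using \<phi>W(3) by (auto simp: tuples_def)
  have finim: "finite ((\<lambda>a. dim_tp I a A0) ` W)"
  proof (rule finite_subset)
    show "(\<lambda>a. dim_tp I a A0) ` W \<subseteq> {0..int N}"
      using dim_tp_le[of I _ A0] dim_tp_nonneg[of I _ A0] WN by fastforce
  qed simp
  obtain B where B: "B \<subseteq> set w" "acl_indep I A B" "dim_tp I w A = int (card B)"
    using dim_tp_obtain[where a=w and I=I and A=A] by blast
  obtain bs where bs: "distinct bs" "set bs = B"
    using finite_distinct_list[of B] finite_subset[OF B(1)] by blast
  define e where "e = length bs"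
  have cardB: "card B = e" using bs distinct_card e_def by fastforce
  define ext where "ext = bs @ w"
  obtain ext' where ext': "tpeq I A ext ext'"
    "\<forall>i<length ext. ext ! i \<notin> acl I (A \<union> set (take i ext)) \<longrightarrow> ext' ! i \<notin> acl I (A \<union> A0 \<union> set (take i ext'))"
    using realize[OF satu cA countable_finite[OF A0(1)], of ext] by blast
  have lw: "length w = N" using WN w by simp
  have lext': "length ext' = e + N" using ext'(1) lw by (simp add: tpeq_def ext_def e_def)
  have tq: "\<And>\<phi>. pars \<phi> \<subseteq> A \<Longrightarrow> fv \<phi> \<subseteq> {..<e + N} \<Longrightarrow> sat I (env ext) \<phi> = sat I (env ext') \<phi>"
    using ext'(1) lw by (auto simp: tpeq_def ext_def e_def)
  define bs' where "bs' = take e ext'"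
  define w' where "w' = drop e ext'"
  have ext'eq: "ext' = bs' @ w'" by (simp add: bs'_def w'_def)
  have lbs': "length bs' = e" using lext' by (simp add: bs'_def)
  have lw': "length w' = N" using lext' by (simp add: w'_def)
  have injs: "inj (\<lambda>i::nat. i + e)" by (auto simp: inj_def)
  have "w' \<in> W"
  proof -
    let ?\<psi> = "ren (\<lambda>i. i + e) \<phi>W"
    have p: "pars ?\<psi> \<subseteq> A" using \<phi>W(1) by (simp add: pars_ren)
    have f: "fv ?\<psi> \<subseteq> {..<e + N}" using \<phi>W(2) by (auto simp: fv_ren[OF injs])
    have "sat I (env w) \<phi>W" using w \<phi>W(3) by simp
    moreover have "env ext \<circ> (\<lambda>i. i + e) = env w" unfolding ext_def by (rule env_append_shift) (simp add: e_def)
    ultimately have "sat I (env ext) ?\<psi>" using sat_ren[OF injs, of I "env ext" \<phi>W] by simp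
    then have "sat I (env ext') ?\<psi>" using tq[OF p f] by simp
    moreover have "env ext' \<circ> (\<lambda>i. i + e) = env w'" unfolding ext'eq by (rule env_append_shift) (simp add: lbs')
    ultimately have "sat I (env w') \<phi>W" using sat_ren[OF injs, of I "env ext'" \<phi>W] by simp
    then show ?thesis using \<phi>W(3) lw' by (simp add: tuples_def)
  qed
  have "set bs' \<subseteq> set w'"
  proof
    fix x assume "x \<in> set bs'"
    then obtain t where t: "t < e" "x = bs' ! t" using lbs' by (auto simp: in_set_conv_nth)
    have "bs ! t \<in> set w" using B(1) bs(2) t(1) e_def by auto
    then obtain j where j: "j < N" "w ! j = bs ! t" using lw by (auto simp: in_set_conv_nth)
    let ?\<psi> = "Eq (Var t) (Var (e + j)) :: ('r,'a) fm"
    have "sat I (env ext) ?\<psi>" using t j lw by (simp add: env_def ext_def e_def nth_append)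
    then have "sat I (env ext') ?\<psi>" using tq[of ?\<psi>] t j by simp
    then have "bs' ! t = w' ! j" using t j lext' lbs' by (simp add: env_def ext'eq nth_append)
    then show "x \<in> set w'" using t j lw' by simp
  qed
  have "\<forall>i<length bs'. bs' ! i \<notin> acl I (A0 \<union> set (take i bs'))"
  proof (intro allI impI)
    fix i assume i: "i < length bs'"
    have "bs ! i \<notin> acl I (A \<union> set (take i bs))"
    proof -
      have "set (take i bs) \<subseteq> B - {bs ! i}"
        using nth_notin_take[OF bs(1), of i] i lbs' bs(2) e_def set_take_subset by fastforce
      then have "acl I (A \<union> set (take i bs)) \<subseteq> acl I (A \<union> (B - {bs ! i}))" by (intro acl_mono) auto
      moreover have "bs ! i \<in> B" using i lbs' bs(2) e_def by auto
      ultimately show ?thesis using B(2) unfolding acl_indep_def by blast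
    qed
    then have "ext ! i \<notin> acl I (A \<union> set (take i ext))"
      using i lbs' by (simp add: ext_def nth_append e_def)
    then have "ext' ! i \<notin> acl I (A \<union> A0 \<union> set (take i ext'))"
      using ext'(2) i lbs' lw by (simp add: ext_def e_def)
    moreover have "ext' ! i = bs' ! i" "take i ext' = take i bs'" using i by (simp_all add: bs'_def)
    moreover have "acl I (A0 \<union> set (take i bs')) \<subseteq> acl I (A \<union> A0 \<union> set (take i bs'))"
      by (intro acl_mono) auto
    ultimately show "bs' ! i \<notin> acl I (A0 \<union> set (take i bs'))" by auto
  qed
  then have ind: "distinct bs'" "acl_indep I A0 (set bs')" using seq_indep[OF ex] by blast+
  have "int e \<le> dim_tp I w' A0"
    using dim_tp_ge[OF \<open>set bs' \<subseteq> set w'\<close> ind(2)] distinct_card[OF ind(1)] lbs' by simp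
  also have "\<dots> \<le> dim I W" unfolding dimW using finim \<open>w' \<in> W\<close> by (intro Max_ge) auto
  finally show ?thesis using B(3) cardB by simp
qed

lemma defbl_N:
  fixes I :: "'r \<Rightarrow> 'a list \<Rightarrow> bool"
  assumes "defbl I A X" "X \<subseteq> tuples N"
  shows "\<exists>\<phi>::('r,'a) fm. pars \<phi> \<subseteq> A \<and> fv \<phi> \<subseteq> {..<N} \<and> X = {xs\<in>tuples N. sat I (env xs) \<phi>}"
proof (cases "X = {}")
  case True
  then show ?thesis by (intro exI[of _ "Neg TT"]) auto
next
  case False
  then obtain x where x: "x \<in> X" by blast
  obtain n0 and \<phi> :: "('r,'a) fm" where \<phi>: "pars \<phi> \<subseteq> A" "fv \<phi> \<subseteq> {..<n0}" "X = {xs\<in>tuples n0. sat I (env xs) \<phi>}"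
    using assms(1) unfolding defbl_def by blast
  have "n0 = N" using x assms(2) \<phi>(3) by (auto simp: tuples_def)
  then show ?thesis using \<phi> by blast
qed

lemma defbl_mono: "A \<subseteq> B \<Longrightarrow> defbl I A X \<Longrightarrow> defbl I B X"
  unfolding defbl_def by blast

lemma defbl_Int:
  fixes I :: "'r \<Rightarrow> 'a list \<Rightarrow> bool"
  assumes "defbl I A X" "defbl I A Y" "X \<subseteq> tuples N" "Y \<subseteq> tuples N"
  shows "defbl I A (X \<inter> Y)"
proof -
  obtain \<phi> :: "('r,'a) fm" where \<phi>: "pars \<phi> \<subseteq> A" "fv \<phi> \<subseteq> {..<N}" "X = {xs\<in>tuples N. sat I (env xs) \<phi>}"
    using defbl_N[OF assms(1,3)] by blast
  obtain \<psi> :: "('r,'a) fm" where \<psi>: "pars \<psi> \<subseteq> A" "fv \<psi> \<subseteq> {..<N}" "Y = {xs\<in>tuples N. sat I (env xs) \<psi>}"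
    using defbl_N[OF assms(2,4)] by blast
  show ?thesis unfolding defbl_def using \<phi> \<psi>
    by (intro exI[of _ N] exI[of _ "Conj \<phi> \<psi>"]) auto
qed

lemma defbl_Diff:
  fixes I :: "'r \<Rightarrow> 'a list \<Rightarrow> bool"
  assumes "defbl I A X" "defbl I A Y" "X \<subseteq> tuples N" "Y \<subseteq> tuples N"
  shows "defbl I A (X - Y)"
proof -
  obtain \<phi> :: "('r,'a) fm" where \<phi>: "pars \<phi> \<subseteq> A" "fv \<phi> \<subseteq> {..<N}" "X = {xs\<in>tuples N. sat I (env xs) \<phi>}"
    using defbl_N[OF assms(1,3)] by blast
  obtain \<psi> :: "('r,'a) fm" where \<psi>: "pars \<psi> \<subseteq> A" "fv \<psi> \<subseteq> {..<N}" "Y = {xs\<in>tuples N. sat I (env xs) \<psi>}"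
    using defbl_N[OF assms(2,4)] by blast
  show ?thesis unfolding defbl_def using \<phi> \<psi>
    by (intro exI[of _ N] exI[of _ "Conj \<phi> (Neg \<psi>)"]) auto
qed

lemma sat_exs_append:
  assumes fv: "fv \<phi> \<subseteq> {..<n+m}" and lu: "length u = n"
  shows "sat I (env u) (exs [n..<n+m] \<phi>) \<longleftrightarrow> (\<exists>v. length v = m \<and> sat I (env (u @ v)) \<phi>)"
proof
  assume "sat I (env u) (exs [n..<n+m] \<phi>)"
  then obtain g where g: "sat I (\<lambda>i. if i \<in> set [n..<n+m] then g i else env u i) \<phi>"
    by (auto simp: sat_exs)
  define v where "v = map (\<lambda>i. g (n + i)) [0..<m]"
  have "sat I (\<lambda>i. if i \<in> set [n..<n+m] then g i else env u i) \<phi> = sat I (env (u @ v)) \<phi>"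
  proof (rule sat_cong, intro ballI)
    fix i assume "i \<in> fv \<phi>"
    then have "i < n + m" using fv by auto
    then show "(if i \<in> set [n..<n+m] then g i else env u i) = env (u @ v) i"
      using lu by (auto simp: env_def v_def nth_append)
  qed
  then show "\<exists>v. length v = m \<and> sat I (env (u @ v)) \<phi>" using g by (auto simp: v_def intro!: exI[of _ v])
next
  assume "\<exists>v. length v = m \<and> sat I (env (u @ v)) \<phi>"
  then obtain v where v: "length v = m" "sat I (env (u @ v)) \<phi>" by blast
  have "sat I (\<lambda>i. if i \<in> set [n..<n+m] then v ! (i - n) else env u i) \<phi> = sat I (env (u @ v)) \<phi>"
  proof (rule sat_cong, intro ballI)
    fix i assume "i \<in> fv \<phi>"
    then have "i < n + m" using fv by auto
    then show "(if i \<in> set [n..<n+m] then v ! (i - n) else env u i) = env (u @ v) i"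
      using lu v(1) by (auto simp: env_def nth_append)
  qed
  then show "sat I (env u) (exs [n..<n+m] \<phi>)" using v(2) by (auto simp: sat_exs)
qed

lemma defbl_proj:
  fixes I :: "'r \<Rightarrow> 'a list \<Rightarrow> bool"
  assumes "defbl I A Z" "Z \<subseteq> tuples (n+m)"
  shows "defbl I A {u \<in> tuples n. \<exists>v. length v = m \<and> u @ v \<in> Z}"
proof -
  obtain \<phi> :: "('r,'a) fm" where \<phi>: "pars \<phi> \<subseteq> A" "fv \<phi> \<subseteq> {..<n+m}" "Z = {xs\<in>tuples (n+m). sat I (env xs) \<phi>}"
    using defbl_N[OF assms] by blast
  have "{u \<in> tuples n. \<exists>v. length v = m \<and> u @ v \<in> Z} = {u \<in> tuples n. sat I (env u) (exs [n..<n+m] \<phi>)}"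
    using sat_exs_append[OF \<phi>(2)] \<phi>(3) by (auto simp: tuples_def)
  moreover have "fv (exs [n..<n+m] \<phi>) \<subseteq> {..<n}" using \<phi>(2) by (auto simp: fv_exs)
  moreover have "pars (exs [n..<n+m] \<phi>) \<subseteq> A" using \<phi>(1) by (simp add: pars_exs)
  ultimately show ?thesis unfolding defbl_def by blast
qed

lemma acl_coord:
  fixes I :: "'r \<Rightarrow> 'a list \<Rightarrow> bool"
  assumes Z: "defbl I A1 Z" "Z \<subseteq> tuples (n+m)" and lu: "length u = n" and lv: "length v = m"
    and uv: "u @ v \<in> Z" and uniq: "\<forall>v'. length v' = m \<and> u @ v' \<in> Z \<longrightarrow> v' = v"
  shows "set v \<subseteq> acl I (A1 \<union> set u)"
proof
  fix c assume "c \<in> set v"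
  then obtain j where j: "j < m" "c = v ! j" using lv by (auto simp: in_set_conv_nth)
  obtain \<phi> :: "('r,'a) fm" where \<phi>: "pars \<phi> \<subseteq> A1" "fv \<phi> \<subseteq> {..<n+m}" "Z = {xs\<in>tuples (n+m). sat I (env xs) \<phi>}"
    using defbl_N[OF Z] by blast
  define \<rho> where "\<rho> = (\<lambda>i::nat. if i < n then i else Suc i)"
  define \<chi> where "\<chi> = exs [Suc n..<Suc n+m] (Conj (Eq (Var n) (Var (Suc n + j))) (ren \<rho> \<phi>))"
  have inj\<rho>: "inj \<rho>" by (auto simp: inj_def \<rho>_def split: if_splits)
  have "fv (ren \<rho> \<phi>) = \<rho> ` fv \<phi>" by (rule fv_ren[OF inj\<rho>])
  then have fvren: "fv (ren \<rho> \<phi>) \<subseteq> {..<Suc n + m} - {n}" using \<phi>(2) by (auto simp: \<rho>_def)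
  have fv\<chi>: "fv \<chi> \<subseteq> {..n}" using fvren j(1) by (auto simp: \<chi>_def fv_exs)
  have pars\<chi>: "pars \<chi> \<subseteq> A1" using \<phi>(1) by (simp add: \<chi>_def pars_exs pars_ren)
  have sem: "sat I (env (u @ [a])) \<chi> \<longleftrightarrow> (\<exists>v'. length v' = m \<and> u @ v' \<in> Z \<and> v' ! j = a)" for a
  proof -
    have fvc: "fv (Conj (Eq (Var n) (Var (Suc n + j))) (ren \<rho> \<phi>)) \<subseteq> {..<Suc n + m}"
      using fvren j(1) by auto
    have "sat I (env (u @ [a])) \<chi> \<longleftrightarrow> (\<exists>w. length w = m \<and> sat I (env (u @ [a] @ w)) (Conj (Eq (Var n) (Var (Suc n + j))) (ren \<rho> \<phi>)))"
      using sat_exs_append[OF fvc, of "u @ [a]" I] lu unfolding \<chi>_def by simp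
    also have "\<dots> \<longleftrightarrow> (\<exists>w. length w = m \<and> a = w ! j \<and> sat I (env (u @ w)) \<phi>)"
    proof -
      have e1: "env (u @ [a] @ w) \<circ> \<rho> = env (u @ w)" if "length w = m" for w
        using that lu by (auto simp: fun_eq_iff env_def \<rho>_def nth_append nth_Cons')
      have e2: "env (u @ [a] @ w) n = a" "env (u @ [a] @ w) (Suc n + j) = w ! j" if "length w = m" for w
        using that lu j(1) by (auto simp: env_def nth_append)
      have e3: "sat I (env (u @ [a] @ w)) (Conj (Eq (Var n) (Var (Suc n + j))) (ren \<rho> \<phi>)) \<longleftrightarrow> (a = w ! j \<and> sat I (env (u @ w)) \<phi>)"
        if "length w = m" for w
        using e1[OF that] e2[OF that] sat_ren[OF inj\<rho>, of I "env (u @ [a] @ w)" \<phi>] by auto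
      show ?thesis using e3 by blast
    qed
    also have "\<dots> \<longleftrightarrow> (\<exists>v'. length v' = m \<and> u @ v' \<in> Z \<and> v' ! j = a)"
      using \<phi>(3) lu by (auto simp: tuples_def)
    finally show ?thesis .
  qed
  have "{a. sat I (env [a]) (tr u \<chi>)} = {a. \<exists>v'. length v' = m \<and> u @ v' \<in> Z \<and> v' ! j = a}"
    by (simp add: sat_tr sem)
  also have "\<dots> = {v ! j}"
  proof
    show "{a. \<exists>v'. length v' = m \<and> u @ v' \<in> Z \<and> v' ! j = a} \<subseteq> {v ! j}" using uniq by blast
    show "{v ! j} \<subseteq> {a. \<exists>v'. length v' = m \<and> u @ v' \<in> Z \<and> v' ! j = a}" using uv lv by blast
  qed
  finally have solset: "{a. sat I (env [a]) (tr u \<chi>)} = {v ! j}" .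
  show "c \<in> acl I (A1 \<union> set u)" unfolding acl_iff
  proof (intro exI conjI)
    show "pars (tr u \<chi>) \<subseteq> A1 \<union> set u" using pars_tr[of u \<chi>] pars\<chi> by auto
    show "fv (tr u \<chi>) \<subseteq> {0}" using fv_tr[of \<chi> u] fv\<chi> lu by auto
    show "finite {a. sat I (env [a]) (tr u \<chi>)}" using solset by simp
    show "sat I (env [c]) (tr u \<chi>)" using solset j(2) by blast
  qed
qed

lemma fv_Ex_Conj_Eq: "fv (Ex L (Conj (Eq (Var L) (Var i)) P)) = ({L} \<union> {i} \<union> fv P) - {L}"
  by (simp only: fv.simps tfv.simps)

lemma definable_box:
  fixes I :: "'r \<Rightarrow> 'a list \<Rightarrow> bool" and \<phi>B :: "('r,'a) fm"
  assumes fvB: "fv \<phi>B \<subseteq> {..<Suc k}" and lBS: "\<forall>i<L. length (BS i) = k"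
  shows "definable I (box (map (\<lambda>i. {c. sat I (env (c # BS i)) \<phi>B}) [0..<L]))"
proof -
  define \<sigma> where "\<sigma> i t = (if L < t \<and> t \<le> L + k then Some (BS i ! (t - L - 1)) else None)" for i t
  define \<chi> where "\<chi> i = Ex L (Conj (Eq (Var L) (Var i)) (psub (\<sigma> i) (ren (\<lambda>t. t + L) \<phi>B)))" for i
  have inj: "inj (\<lambda>t::nat. t + L)" by (auto simp: inj_def)
  have sem: "sat I e (\<chi> i) \<longleftrightarrow> sat I (env (e i # BS i)) \<phi>B" if i: "i < L" for e i
  proof -
    have iL: "i \<noteq> L" using i by simp
    have "sat I e (\<chi> i) \<longleftrightarrow> (\<exists>c. c = e i \<and> sat I (e(L := c)) (psub (\<sigma> i) (ren (\<lambda>t. t + L) \<phi>B)))"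
      unfolding \<chi>_def by (simp only: sat.simps tval.simps fun_upd_same fun_upd_other[OF iL])
    also have "\<dots> \<longleftrightarrow> sat I (e(L := e i)) (psub (\<sigma> i) (ren (\<lambda>t. t + L) \<phi>B))" by blast
    also have "\<dots> \<longleftrightarrow> sat I (ov (e(L := e i)) (\<sigma> i) \<circ> (\<lambda>t. t + L)) \<phi>B"
      by (simp add: sat_psub sat_ren[OF inj])
    also have "\<dots> \<longleftrightarrow> sat I (env (e i # BS i)) \<phi>B"
    proof (rule sat_cong, intro ballI)
      fix t assume "t \<in> fv \<phi>B"
      then have t: "t < Suc k" using fvB by auto
      show "(ov (e(L := e i)) (\<sigma> i) \<circ> (\<lambda>t. t + L)) t = env (e i # BS i) t"
      proof (cases t)
        case 0 then show ?thesis by (simp add: ov_def \<sigma>_def env_def)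
      next
        case (Suc s)
        then show ?thesis using t lBS i by (simp add: ov_def \<sigma>_def env_def)
      qed
    qed
    finally show ?thesis .
  qed
  have fv\<chi>: "fv (\<chi> i) \<subseteq> {..<L}" if i: "i < L" for i
  proof -
    have "fv (psub (\<sigma> i) (ren (\<lambda>t. t + L) \<phi>B)) \<subseteq> fv (ren (\<lambda>t. t + L) \<phi>B) - {t. \<sigma> i t \<noteq> None}"
      by (rule fv_psub)
    also have "\<dots> \<subseteq> {L}"
    proof
      fix x assume x: "x \<in> fv (ren (\<lambda>t. t + L) \<phi>B) - {t. \<sigma> i t \<noteq> None}"
      then obtain t where t: "t \<in> fv \<phi>B" "x = t + L" using fv_ren[OF inj, of \<phi>B] by auto
      have tk: "t < Suc k" using t(1) fvB by auto
      have "\<sigma> i x = None" using x by simp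
      then have "\<not> (L < x \<and> x \<le> L + k)" unfolding \<sigma>_def by (simp split: if_splits)
      then have "t = 0" using t(2) tk by simp
      then show "x \<in> {L}" using t(2) by simp
    qed
    finally have hP: "fv (psub (\<sigma> i) (ren (\<lambda>t. t + L) \<phi>B)) \<subseteq> {L}" .
    have "fv (\<chi> i) = ({L} \<union> {i} \<union> fv (psub (\<sigma> i) (ren (\<lambda>t. t + L) \<phi>B))) - {L}"
      unfolding \<chi>_def by (rule fv_Ex_Conj_Eq)
    then have "fv (\<chi> i) \<subseteq> {i}" using hP by auto
    then show ?thesis using i by auto
  qed
  define \<Psi> where "\<Psi> = Conjs (map \<chi> [0..<L])"
  have s1: "sat I (env xs) \<Psi> \<longleftrightarrow> (\<forall>i<L. sat I (env (env xs i # BS i)) \<phi>B)" for xs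
  proof -
    have "sat I (env xs) \<Psi> \<longleftrightarrow> (\<forall>i<L. sat I (env xs) (\<chi> i))"
      unfolding \<Psi>_def sat_Conjs by auto
    also have "\<dots> \<longleftrightarrow> (\<forall>i<L. sat I (env (env xs i # BS i)) \<phi>B)"
    proof (intro iffI allI impI)
      fix i assume "\<forall>i<L. sat I (env xs) (\<chi> i)" "i < L"
      then show "sat I (env (env xs i # BS i)) \<phi>B" using sem[of i "env xs"] by simp
    next
      fix i assume "\<forall>i<L. sat I (env (env xs i # BS i)) \<phi>B" "i < L"
      then show "sat I (env xs) (\<chi> i)" using sem[of i "env xs"] by simp
    qed
    finally show ?thesis .
  qed
  have "box (map (\<lambda>i. {c. sat I (env (c # BS i)) \<phi>B}) [0..<L]) = {xs \<in> tuples L. sat I (env xs) \<Psi>}"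
  proof (intro set_eqI)
    fix xs
    show "xs \<in> box (map (\<lambda>i. {c. sat I (env (c # BS i)) \<phi>B}) [0..<L]) \<longleftrightarrow> xs \<in> {xs \<in> tuples L. sat I (env xs) \<Psi>}"
    proof (cases "length xs = L")
      case True
      then have "\<forall>i<L. env xs i = xs ! i" by (simp add: env_def)
      then show ?thesis using True s1[of xs] by (simp add: box_def tuples_def)
    next
      case False
      then show ?thesis by (simp add: box_def tuples_def)
    qed
  qed
  moreover have "fv \<Psi> \<subseteq> {..<L}" using fv\<chi> by (simp add: \<Psi>_def fv_Conjs UN_subset_iff)
  ultimately have "pars \<Psi> \<subseteq> UNIV \<and> fv \<Psi> \<subseteq> {..<L} \<and>
     box (map (\<lambda>i. {c. sat I (env (c # BS i)) \<phi>B}) [0..<L]) = {xs \<in> tuples L. sat I (env xs) \<Psi>}"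
    by blast
  then show ?thesis unfolding definable_def defbl_def by blast
qed

lemma lopen_box: "(\<forall>i<length Os. openin \<tau> (Os ! i)) \<Longrightarrow> lopen \<tau> (box Os)"
  unfolding lopen_def by (auto simp: box_def)

lemma lopen_UNIV: "topspace \<tau> = UNIV \<Longrightarrow> lopen \<tau> UNIV"
proof -
  assume "topspace \<tau> = UNIV"
  then have "openin \<tau> UNIV" using openin_topspace by metis
  then show ?thesis unfolding lopen_def
    by (intro ballI exI[of _ "replicate (length _) UNIV"]) (auto simp: box_def)
qed

lemma lopen_Int: assumes "lopen \<tau> U" "lopen \<tau> V" shows "lopen \<tau> (U \<inter> V)"
  unfolding lopen_def
proof
  fix xs assume xs: "xs \<in> U \<inter> V"
  obtain Os where Os: "length Os = length xs" "\<forall>i<length Os. openin \<tau> (Os ! i)" "xs \<in> box Os" "box Os \<subseteq> U"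
    using assms(1) xs unfolding lopen_def by blast
  obtain Ps where Ps: "length Ps = length xs" "\<forall>i<length Ps. openin \<tau> (Ps ! i)" "xs \<in> box Ps" "box Ps \<subseteq> V"
    using assms(2) xs unfolding lopen_def by blast
  define Qs where "Qs = map2 (\<inter>) Os Ps"
  have "length Qs = length xs" using Os(1) Ps(1) by (simp add: Qs_def)
  moreover have "\<forall>i<length Qs. openin \<tau> (Qs ! i)" using Os(2) Ps(2) Os(1) Ps(1) by (auto simp: Qs_def)
  moreover have "xs \<in> box Qs" using Os(3) Ps(3) Os(1) Ps(1) by (auto simp: Qs_def box_def)
  moreover have "box Qs \<subseteq> box Os" "box Qs \<subseteq> box Ps" using Os(1) Ps(1) by (auto simp: Qs_def box_def)
  ultimately show "\<exists>Os. length Os = length xs \<and> (\<forall>i<length Os. openin \<tau> (Os ! i)) \<and> xs \<in> box Os \<and> box Os \<subseteq> U \<inter> V"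
    using Os(4) Ps(4) by blast
qed

lemma ropen_trans: assumes "ropen \<tau> X U" "ropen \<tau> U W" shows "ropen \<tau> X W"
proof -
  obtain O1 where O1: "lopen \<tau> O1" "U = O1 \<inter> X" using assms(1) unfolding ropen_def by blast
  obtain O2 where O2: "lopen \<tau> O2" "W = O2 \<inter> U" using assms(2) unfolding ropen_def by blast
  have "W = (O2 \<inter> O1) \<inter> X" using O1(2) O2(2) by auto
  then show ?thesis unfolding ropen_def using lopen_Int[OF O2(1) O1(1)] by blast
qed

lemma ropen_Int: assumes "ropen \<tau> X U" "lopen \<tau> Op" shows "ropen \<tau> X (Op \<inter> U)"
proof -
  obtain O1 where O1: "lopen \<tau> O1" "U = O1 \<inter> X" using assms(1) unfolding ropen_def by blast
  have "Op \<inter> U = (Op \<inter> O1) \<inter> X" using O1(2) by auto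
  then show ?thesis unfolding ropen_def using lopen_Int[OF assms(2) O1(1)] by blast
qed

lemma ropen_sub: "ropen \<tau> X U \<Longrightarrow> U \<subseteq> X"
  unfolding ropen_def by auto

lemma lhomeo_cong: assumes "\<forall>u\<in>U. h u = f u" "lhomeo \<tau> U V h" shows "lhomeo \<tau> U V f"
proof -
  have inv: "the_inv_into U h = the_inv_into U f"
  proof
    fix y
    have "(\<lambda>x. x \<in> U \<and> h x = y) = (\<lambda>x. x \<in> U \<and> f x = y)" using assms(1) by auto
    then show "the_inv_into U h y = the_inv_into U f y" unfolding the_inv_into_def by simp
  qed
  have "bij_betw h U V" using assms(2) by (simp add: lhomeo_def)
  then have b: "bij_betw f U V" using bij_betw_cong[of U h f V] assms(1) by simp
  have "{x \<in> U. h x \<in> W} = {x \<in> U. f x \<in> W}" for W using assms(1) by auto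
  then have c: "lcont \<tau> U f = lcont \<tau> U h" unfolding lcont_def by simp
  have "lcont \<tau> U h" "lcont \<tau> V (the_inv_into U h)" using assms(2) by (simp_all add: lhomeo_def)
  then show ?thesis using b c inv unfolding lhomeo_def by simp
qed

lemma lhomeo_restrict:
  assumes h: "lhomeo \<tau> U0 V0 f" and U: "U \<subseteq> U0"
  shows "lhomeo \<tau> U (f ` U) f"
proof -
  have bij0: "bij_betw f U0 V0" using h by (simp add: lhomeo_def)
  then have inj0: "inj_on f U0" by (simp add: bij_betw_def)
  have inj: "inj_on f U" using inj_on_subset[OF inj0 U] .
  have fU: "f ` U \<subseteq> V0" using bij0 U by (auto simp: bij_betw_def)
  have inveq: "the_inv_into U f v = the_inv_into U0 f v" if vU: "v \<in> f ` U" for v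
  proof -
    obtain u where u: "u \<in> U" "v = f u" using vU by blast
    then show ?thesis using the_inv_into_f_f[OF inj u(1)] the_inv_into_f_f[OF inj0] U by auto
  qed
  have "lcont \<tau> U f" unfolding lcont_def
  proof (intro allI impI)
    fix W assume "lopen \<tau> W"
    moreover have "lcont \<tau> U0 f" using h by (simp add: lhomeo_def)
    ultimately have "ropen \<tau> U0 {x \<in> U0. f x \<in> W}" by (simp add: lcont_def)
    then obtain Oo where O: "lopen \<tau> Oo" "{x \<in> U0. f x \<in> W} = Oo \<inter> U0"
      unfolding ropen_def by blast
    have "{x \<in> U. f x \<in> W} = Oo \<inter> U" using O(2) U by blast
    then show "ropen \<tau> U {x \<in> U. f x \<in> W}" using O(1) unfolding ropen_def by blast
  qed
  moreover have "lcont \<tau> (f ` U) (the_inv_into U f)" unfolding lcont_def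
  proof (intro allI impI)
    fix W assume "lopen \<tau> W"
    moreover have "lcont \<tau> V0 (the_inv_into U0 f)" using h by (simp add: lhomeo_def)
    ultimately have "ropen \<tau> V0 {x \<in> V0. the_inv_into U0 f x \<in> W}" by (simp add: lcont_def)
    then obtain Oo where O: "lopen \<tau> Oo" "{x \<in> V0. the_inv_into U0 f x \<in> W} = Oo \<inter> V0"
      unfolding ropen_def by blast
    have "{x \<in> f ` U. the_inv_into U f x \<in> W} = Oo \<inter> f ` U"
    proof (intro set_eqI iffI)
      fix x assume x: "x \<in> {x \<in> f ` U. the_inv_into U f x \<in> W}"
      then have "x \<in> V0" "the_inv_into U0 f x \<in> W" using fU inveq by auto
      then have "x \<in> Oo \<inter> V0" using O(2) by blast
      then show "x \<in> Oo \<inter> f ` U" using x by blast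
    next
      fix x assume x: "x \<in> Oo \<inter> f ` U"
      then have "x \<in> Oo \<inter> V0" using fU by blast
      then have "the_inv_into U0 f x \<in> W" using O(2) by blast
      then show "x \<in> {x \<in> f ` U. the_inv_into U f x \<in> W}" using x inveq by auto
    qed
    then show "ropen \<tau> (f ` U) {x \<in> f ` U. the_inv_into U f x \<in> W}" using O(1) unfolding ropen_def by blast
  qed
  moreover have "bij_betw f U (f ` U)" using inj by (simp add: bij_betw_def)
  ultimately show ?thesis unfolding lhomeo_def by blast
qed

lemma box_append:
  assumes "length a = length Os1" "length b = length Os2"
  shows "a @ b \<in> box (Os1 @ Os2) \<longleftrightarrow> a \<in> box Os1 \<and> b \<in> box Os2"
proof -
  have "(\<forall>i<length Os1 + length Os2. (a @ b) ! i \<in> (Os1 @ Os2) ! i) \<longleftrightarrow>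
        (\<forall>i<length Os1. a ! i \<in> Os1 ! i) \<and> (\<forall>i<length Os2. b ! i \<in> Os2 ! i)"
  proof safe
    fix i assume "\<forall>i<length Os1 + length Os2. (a @ b) ! i \<in> (Os1 @ Os2) ! i" "i < length Os1"
    then have "(a @ b) ! i \<in> (Os1 @ Os2) ! i" by simp
    moreover have "(a @ b) ! i = a ! i" "(Os1 @ Os2) ! i = Os1 ! i"
      using \<open>i < length Os1\<close> assms(1) by (simp_all add: nth_append)
    ultimately show "a ! i \<in> Os1 ! i" by simp
  next
    fix i assume H: "\<forall>i<length Os1 + length Os2. (a @ b) ! i \<in> (Os1 @ Os2) ! i" "i < length Os2"
    have "length Os1 + i < length Os1 + length Os2" using H(2) by simp
    then have "(a @ b) ! (length Os1 + i) \<in> (Os1 @ Os2) ! (length Os1 + i)" using H(1) by blast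
    moreover have "(Os1 @ Os2) ! (length Os1 + i) = Os2 ! i" by (rule nth_append_length_plus)
    moreover have "(a @ b) ! (length Os1 + i) = b ! i" using assms(1) nth_append_length_plus[of a b i] by simp
    ultimately show "b ! i \<in> Os2 ! i" by simp
  next
    fix i assume H: "\<forall>i<length Os1. a ! i \<in> Os1 ! i" "\<forall>i<length Os2. b ! i \<in> Os2 ! i" "i < length Os1 + length Os2"
    show "(a @ b) ! i \<in> (Os1 @ Os2) ! i"
    proof (cases "i < length Os1")
      case True
      then have "(a @ b) ! i = a ! i" "(Os1 @ Os2) ! i = Os1 ! i" using assms(1) by (simp_all add: nth_append)
      then show ?thesis using H(1) True by simp
    next
      case False
      define j where "j = i - length Os1"
      have j: "j < length Os2" using H(3) False by (simp add: j_def)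
      have "(a @ b) ! i = b ! j" "(Os1 @ Os2) ! i = Os2 ! j" using assms(1) False by (simp_all add: nth_append j_def)
      then show ?thesis using H(2) j by simp
    qed
  qed
  then show ?thesis using assms by (simp add: box_def)
qed

theorem lemma2p16:
  fixes I :: "'r \<Rightarrow> 'a list \<Rightarrow> bool" and \<tau> :: "'a topology"
    and S :: "'a list set set" and A :: "'a set"
    and X Y :: "'a list set" and n m :: nat
    and f :: "'a list \<Rightarrow> 'a list" and x :: "'a list"
  assumes "t_minimal I \<tau>"
    and "lore I \<tau> S"
    and "countable A"
    and "X \<subseteq> tuples n" and "Y \<subseteq> tuples m"
    and "defbl I A X" and "defbl I A Y"
    and "dim I X = dim I Y"
    and "f ` X \<subseteq> Y"
    and "defbl I A (graph X f)"
    and "\<forall>y\<in>Y. finite {u \<in> X. f u = y}"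
    and "x \<in> X" and "dim_tp I x A = dim I X"
  shows "\<exists>U V. ropen \<tau> X U \<and> x \<in> U \<and> ropen \<tau> Y V \<and> f x \<in> V \<and>
           loric_homeo \<tau> S U V f"
proof -
  note tm = assms(1) and lr = assms(2) and cA = assms(3) and XT = assms(4) and YT = assms(5)
    and dX = assms(6) and dY = assms(7) and dXY = assms(8) and fXY = assms(9) and dZ = assms(10)
    and fin = assms(11) and xX = assms(12) and gx = assms(13)
  have hg: "hausdorff_geometric I \<tau>" using tm by (simp add: t_minimal_def)
  note hg' = hg[unfolded hausdorff_geometric_def]
  have top: "topspace \<tau> = UNIV" using hg' by (rule conjunct1)
  have geo: "geometric I" using hg'[THEN conjunct2, THEN conjunct2, THEN conjunct1] .
  then have ex: "acl_exchange I" by (simp add: geometric_def)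
  have satu: "aleph1_saturated I" using hg'[THEN conjunct2, THEN conjunct2, THEN conjunct2, THEN conjunct1] .
  note H4 = hg'[THEN conjunct2, THEN conjunct2, THEN conjunct2, THEN conjunct2, THEN conjunct2, THEN conjunct1, rule_format]
  note H5 = hg'[THEN conjunct2, THEN conjunct2, THEN conjunct2, THEN conjunct2, THEN conjunct2, THEN conjunct2, rule_format]
  note lr' = lr[unfolded lore_def]
  note L3 = lr'[THEN conjunct2, THEN conjunct2, THEN conjunct2, THEN conjunct2, THEN conjunct2, THEN conjunct2, THEN conjunct2, THEN conjunct1, rule_format]
  note L4 = lr'[THEN conjunct2, THEN conjunct2, THEN conjunct2, THEN conjunct2, THEN conjunct2, THEN conjunct2, THEN conjunct2, THEN conjunct2, THEN conjunct2, rule_format]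
  have basis: "\<exists>(\<phi>::('r,'a) fm) k. pars \<phi> = {} \<and> fv \<phi> \<subseteq> {..<Suc k} \<and>
        (\<forall>bs. length bs = k \<longrightarrow> openin \<tau> {a. sat I (env (a # bs)) \<phi>}) \<and>
        (\<forall>U a. openin \<tau> U \<and> a \<in> U \<longrightarrow>
           (\<exists>bs. length bs = k \<and> a \<in> {c. sat I (env (c # bs)) \<phi>} \<and> {c. sat I (env (c # bs)) \<phi>} \<subseteq> U))"
    using tm unfolding t_minimal_def by blast
  then obtain \<phi>B :: "('r,'a) fm" and kB where
    B1: "fv \<phi>B \<subseteq> {..<Suc kB}" and
    B2: "\<forall>bs. length bs = kB \<longrightarrow> openin \<tau> {a. sat I (env (a # bs)) \<phi>B}" and
    B3: "\<forall>U a. openin \<tau> U \<and> a \<in> U \<longrightarrow>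
           (\<exists>bs. length bs = kB \<and> a \<in> {c. sat I (env (c # bs)) \<phi>B} \<and> {c. sat I (env (c # bs)) \<phi>B} \<subseteq> U)"
    by blast

  define Z where "Z = graph X f"
  have XN: "length u = n" if "u \<in> X" for u using that XT by (auto simp: tuples_def)
  have fXN: "length (f u) = m" if "u \<in> X" for u using that fXY YT by (auto simp: tuples_def)
  have Zin: "u @ f u \<in> Z" if "u \<in> X" for u using that by (auto simp: Z_def graph_def)
  have Zdec: "\<exists>u\<in>X. z = u @ f u" if "z \<in> Z" for z using that by (auto simp: Z_def graph_def)
  have Zuniq: "u \<in> X \<and> v = f u" if uvZ: "u @ v \<in> Z" and lu: "length u = n" for u v
  proof -
    obtain u' where u': "u' \<in> X" "u @ v = u' @ f u'" using Zdec[OF uvZ] by blast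
    have "length u' = n" using XN[OF u'(1)] .
    then have "u = u' \<and> v = f u'" using u'(2) lu by (simp add: append_eq_append_conv)
    then show ?thesis using u'(1) by simp
  qed
  have Zsub: "Z \<subseteq> tuples (n + m)"
  proof
    fix z assume "z \<in> Z"
    then obtain u where "u \<in> X" "z = u @ f u" using Zdec by blast
    then show "z \<in> tuples (n + m)" using XN fXN by (simp add: tuples_def)
  qed
  have dZA: "defbl I A Z" using dZ by (simp add: Z_def)
  have xfx: "x @ f x \<in> Z" using Zin[OF xX] .
  have Zne: "Z \<noteq> {}" using xfx by blast

  define d where "d = dim I X"
  define A1 where "A1 = (SOME A1. finite A1 \<and> defbl I A1 Z)"
  have "\<exists>A1. finite A1 \<and> defbl I A1 Z"
  proof -
    obtain n0 and \<phi> :: "('r,'a) fm" where \<phi>: "pars \<phi> \<subseteq> A" "fv \<phi> \<subseteq> {..<n0}" "Z = {xs \<in> tuples n0. sat I (env xs) \<phi>}"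
      using dZA unfolding defbl_def by blast
    then have "defbl I (pars \<phi>) Z" unfolding defbl_def by blast
    then show ?thesis using finite_pars by blast
  qed
  then have A1: "finite A1" "defbl I A1 Z" unfolding A1_def by (metis (mono_tags, lifting) someI_ex)+
  have cA1: "countable A1" using A1(1) by (rule countable_finite)
  have dimZ: "dim I Z = Max ((\<lambda>a. dim_tp I a A1) ` Z)"
    using Zne unfolding dim_def dim_over_def A1_def by simp
  have finim: "finite ((\<lambda>a. dim_tp I a A1) ` Z)"
  proof (rule finite_subset)
    show "(\<lambda>a. dim_tp I a A1) ` Z \<subseteq> {0..int (n + m)}"
    proof
      fix y assume "y \<in> (\<lambda>a. dim_tp I a A1) ` Z"
      then obtain z where z: "z \<in> Z" "y = dim_tp I z A1" by blast
      have "length z = n + m" using z(1) Zsub by (auto simp: tuples_def)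
      then show "y \<in> {0..int (n + m)}" using z(2) dim_tp_le[of I z A1] dim_tp_nonneg[of I z A1] by simp
    qed
  qed simp
  have projX: "{u \<in> tuples n. \<exists>v. length v = m \<and> u @ v \<in> Z} = X"
  proof (intro set_eqI iffI)
    fix u assume "u \<in> {u \<in> tuples n. \<exists>v. length v = m \<and> u @ v \<in> Z}"
    then obtain v where "u \<in> tuples n" "u @ v \<in> Z" by blast
    then show "u \<in> X" using Zuniq by (auto simp: tuples_def)
  next
    fix u assume u: "u \<in> X"
    then show "u \<in> {u \<in> tuples n. \<exists>v. length v = m \<and> u @ v \<in> Z}"
      using Zin[OF u] fXN[OF u] XN[OF u] by (auto simp: tuples_def)
  qed
  have dXA1: "defbl I A1 X" using defbl_proj[OF A1(2) Zsub] projX by simp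
  have upper: "dim_tp I z A1 \<le> d" if z: "z \<in> Z" for z
  proof -
    obtain u where u: "u \<in> X" "z = u @ f u" using Zdec[OF z] by blast
    have uniq: "\<forall>v'. length v' = m \<and> u @ v' \<in> Z \<longrightarrow> v' = f u" using Zuniq XN[OF u(1)] by blast
    have "set (f u) \<subseteq> acl I (A1 \<union> set u)"
      by (rule acl_coord[OF A1(2) Zsub XN[OF u(1)] fXN[OF u(1)] Zin[OF u(1)] uniq])
    then have "dim_tp I (u @ f u) A1 \<le> dim_tp I u A1" by (rule dim_tp_append_acl[OF ex])
    also have "\<dots> \<le> dim I X" by (rule claimP[OF ex satu cA1 dXA1 u(1)])
    finally show ?thesis using u(2) by (simp add: d_def)
  qed
  have lower: "\<exists>z\<in>Z. d \<le> dim_tp I z A1"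
  proof -
    have "lopen \<tau> UNIV" by (rule lopen_UNIV[OF top])
    moreover have "countable (A \<union> A1)" using cA cA1 by simp
    ultimately obtain b where b: "b \<in> UNIV \<inter> X" "dim_tp I b (A \<union> A1) = dim I X"
      using H4[of A "A \<union> A1" X x UNIV] cA dX xX gx by blast
    have "d = dim_tp I b (A \<union> A1)" using b(2) by (simp add: d_def)
    also have "\<dots> \<le> dim_tp I b A1" by (rule dim_tp_anti) auto
    also have "\<dots> \<le> dim_tp I (b @ f b) A1" by (rule dim_tp_mono_set) auto
    finally show ?thesis using Zin b(1) by blast
  qed
  have dimZd: "dim I Z = d"
  proof (rule antisym)
    show "dim I Z \<le> d" unfolding dimZ using finim Zne upper by (simp add: Max_le_iff)
  next
    obtain z where z: "z \<in> Z" "d \<le> dim_tp I z A1" using lower by blast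
    have "dim_tp I z A1 \<le> Max ((\<lambda>a. dim_tp I a A1) ` Z)" using finim z(1) by (intro Max_ge) auto
    then show "d \<le> dim I Z" unfolding dimZ using z(2) by simp
  qed
  have genxz: "dim_tp I (x @ f x) A = d"
  proof (rule antisym)
    show "dim_tp I (x @ f x) A \<le> d" using claimP[OF ex satu cA dZA xfx] dimZd by simp
  next
    have "d = dim_tp I x A" using gx by (simp add: d_def)
    also have "\<dots> \<le> dim_tp I (x @ f x) A" by (rule dim_tp_mono_set) auto
    finally show "d \<le> dim_tp I (x @ f x) A" .
  qed

  have ZXY: "Z \<subseteq> lprod X Y"
  proof
    fix z assume "z \<in> Z"
    then obtain u where "u \<in> X" "z = u @ f u" using Zdec by blast
    then show "z \<in> lprod X Y" using fXY by (auto simp: lprod_def)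
  qed
  have finA: "\<forall>u\<in>X. finite {v \<in> Y. u @ v \<in> Z}"
  proof
    fix u assume u: "u \<in> X"
    have "{v \<in> Y. u @ v \<in> Z} \<subseteq> {f u}" using Zuniq XN[OF u] by blast
    then show "finite {v \<in> Y. u @ v \<in> Z}" using finite_subset by blast
  qed
  have finB: "\<forall>v\<in>Y. finite {u \<in> X. u @ v \<in> Z}"
  proof
    fix v assume v: "v \<in> Y"
    have "{u \<in> X. u @ v \<in> Z} \<subseteq> {u \<in> X. f u = v}" using Zuniq XN by blast
    then show "finite {u \<in> X. u @ v \<in> Z}" using fin v finite_subset by blast
  qed
  have fxY: "f x \<in> Y" using fXY xX by blast
  obtain U0 V0 h where U0: "ropen \<tau> X U0" "x \<in> U0" and V0: "ropen \<tau> Y V0" "f x \<in> V0"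
    and hU0: "lhomeo \<tau> U0 V0 h" and grh: "Z \<inter> lprod U0 V0 = graph U0 h"
    using H5[of A X n Y m Z x "f x"] cA XT YT dX dY dZA ZXY dimZd dXY finA finB xfx xX fxY genxz
    by (auto simp: d_def)
  have U0X: "U0 \<subseteq> X" using U0(1) by (rule ropen_sub)
  have V0Y: "V0 \<subseteq> Y" using V0(1) by (rule ropen_sub)
  have hf: "\<forall>u\<in>U0. h u = f u"
  proof
    fix u assume u: "u \<in> U0"
    have "u @ h u \<in> graph U0 h" using u by (auto simp: graph_def)
    then have uh: "u @ h u \<in> Z" "u @ h u \<in> lprod U0 V0" using grh by blast+
    then obtain a b where ab: "u @ h u = a @ b" "a \<in> U0" "b \<in> V0" by (auto simp: lprod_def)
    have "length a = n" "length u = n" using ab(2) u U0X XN by auto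
    then have "(u @ h u = a @ b) = (u = a \<and> h u = b)" by (intro append_eq_append_conv) simp
    then have "h u = b" using ab(1) by blast
    then have "length (h u) = m" using ab(3) V0Y YT by (auto simp: tuples_def)
    then show "h u = f u" using Zuniq[OF uh(1)] XN U0X u by auto
  qed
  have fU0: "lhomeo \<tau> U0 V0 f" by (rule lhomeo_cong[OF hf hU0])

  obtain Z' where Z': "Z' \<subseteq> Z" "ropen \<tau> Z Z'" "defbl I A Z'" "Z' \<in> S" "dim I (Z - Z') < dim I Z"
    using L4[of A Z] cA dZA Zne by blast
  have xZ': "x @ f x \<in> Z'"
  proof (rule ccontr)
    assume "x @ f x \<notin> Z'"
    then have "x @ f x \<in> Z - Z'" using xfx by blast
    moreover have "defbl I A (Z - Z')" using defbl_Diff[OF dZA Z'(3) Zsub] Z'(1) Zsub by blast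
    ultimately have "dim_tp I (x @ f x) A \<le> dim I (Z - Z')" using claimP[OF ex satu cA] by blast
    then show False using Z'(5) genxz dimZd by simp
  qed

  obtain OU where OU: "lopen \<tau> OU" "U0 = OU \<inter> X" using U0(1) unfolding ropen_def by blast
  obtain OV where OV: "lopen \<tau> OV" "V0 = OV \<inter> Y" using V0(1) unfolding ropen_def by blast
  obtain O' where O': "lopen \<tau> O'" "Z' = O' \<inter> Z" using Z'(2) unfolding ropen_def by blast
  have xfxO': "x @ f x \<in> O'" using xZ' O'(2) by blast
  obtain Ps where Ps: "length Ps = length (x @ f x)" "\<forall>i<length Ps. openin \<tau> (Ps ! i)" "x @ f x \<in> box Ps" "box Ps \<subseteq> O'"
    using O'(1) xfxO' unfolding lopen_def by blast
  have xOU: "x \<in> OU" using U0(2) OU(2) by blast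
  obtain Qs where Qs: "length Qs = length x" "\<forall>i<length Qs. openin \<tau> (Qs ! i)" "x \<in> box Qs" "box Qs \<subseteq> OU"
    using OU(1) xOU unfolding lopen_def by blast
  have fxOV: "f x \<in> OV" using V0(2) OV(2) by blast
  obtain Rs where Rs: "length Rs = length (f x)" "\<forall>i<length Rs. openin \<tau> (Rs ! i)" "f x \<in> box Rs" "box Rs \<subseteq> OV"
    using OV(1) fxOV unfolding lopen_def by blast
  have lx: "length x = n" using XN[OF xX] .
  have lfx: "length (f x) = m" using fXN[OF xX] .
  define QR where "QR = Qs @ Rs"
  have lQR: "length QR = n + m" using Qs(1) Rs(1) lx lfx by (simp add: QR_def)
  have lPs: "length Ps = n + m" using Ps(1) lx lfx by simp
  have xQR: "x @ f x \<in> box QR" unfolding QR_def using box_append[of x Qs "f x" Rs] Qs(1) Rs(1) Qs(3) Rs(3) by simp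
  have QRo: "\<forall>i<n+m. openin \<tau> (QR ! i)"
  proof (intro allI impI)
    fix i assume i: "i < n + m"
    show "openin \<tau> (QR ! i)"
    proof (cases "i < n")
      case True then show ?thesis using Qs(1,2) lx by (simp add: QR_def nth_append)
    next
      case False then show ?thesis using Rs(1,2) lx lfx Qs(1) i by (simp add: QR_def nth_append)
    qed
  qed
  have pt: "(x @ f x) ! i \<in> Ps ! i \<inter> QR ! i \<and> openin \<tau> (Ps ! i \<inter> QR ! i)" if i: "i < n + m" for i
    using Ps(2,3) xQR QRo lPs lQR i by (auto simp: box_def intro!: openin_Int)
  have "\<forall>i. \<exists>bs. i < n + m \<longrightarrow> length bs = kB \<and> (x @ f x) ! i \<in> {c. sat I (env (c # bs)) \<phi>B} \<and>
        {c. sat I (env (c # bs)) \<phi>B} \<subseteq> Ps ! i \<inter> QR ! i"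
  proof
    fix i
    show "\<exists>bs. i < n + m \<longrightarrow> length bs = kB \<and> (x @ f x) ! i \<in> {c. sat I (env (c # bs)) \<phi>B} \<and>
        {c. sat I (env (c # bs)) \<phi>B} \<subseteq> Ps ! i \<inter> QR ! i"
    proof (cases "i < n + m")
      case True
      then show ?thesis using B3 pt[OF True] by blast
    qed simp
  qed
  then obtain BS where BS: "\<forall>i. i < n + m \<longrightarrow> length (BS i) = kB \<and> (x @ f x) ! i \<in> {c. sat I (env (c # BS i)) \<phi>B} \<and>
        {c. sat I (env (c # BS i)) \<phi>B} \<subseteq> Ps ! i \<inter> QR ! i"
    using choice[of "\<lambda>i bs. i < n + m \<longrightarrow> length bs = kB \<and> (x @ f x) ! i \<in> {c. sat I (env (c # bs)) \<phi>B} \<and>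
        {c. sat I (env (c # bs)) \<phi>B} \<subseteq> Ps ! i \<inter> QR ! i"] by blast
  define Bs where "Bs = map (\<lambda>i. {c. sat I (env (c # BS i)) \<phi>B}) [0..<n+m]"
  define B where "B = box Bs"
  have lBs: "length Bs = n + m" by (simp add: Bs_def)
  have Bso: "\<forall>i<length Bs. openin \<tau> (Bs ! i)" using BS B2 by (auto simp: Bs_def)
  have Blo: "lopen \<tau> B" unfolding B_def by (rule lopen_box[OF Bso])
  have xB: "x @ f x \<in> B" using BS lx lfx by (auto simp: B_def box_def Bs_def)
  have Bsub: "Bs ! i \<subseteq> Ps ! i \<inter> QR ! i" if "i < n + m" for i using BS that by (auto simp: Bs_def)
  have BPs: "B \<subseteq> box Ps"
  proof
    fix z assume "z \<in> B"
    then have "length z = n + m" "\<forall>i<n+m. z ! i \<in> Bs ! i" using lBs by (auto simp: B_def box_def)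
    then show "z \<in> box Ps" using Bsub lPs by (auto simp: box_def)
  qed
  have BQR: "B \<subseteq> box QR"
  proof
    fix z assume "z \<in> B"
    then have "length z = n + m" "\<forall>i<n+m. z ! i \<in> Bs ! i" using lBs by (auto simp: B_def box_def)
    then show "z \<in> box QR" using Bsub lQR by (auto simp: box_def)
  qed
  define Bx where "Bx = box (take n Bs)"
  define By where "By = box (drop n Bs)"
  have Bsplit: "u @ v \<in> B \<longleftrightarrow> u \<in> Bx \<and> v \<in> By" if "length u = n" "length v = m" for u v
  proof -
    have "Bs = take n Bs @ drop n Bs" by simp
    then have "B = box (take n Bs @ drop n Bs)" by (simp add: B_def)
    then show ?thesis using box_append[of u "take n Bs" v "drop n Bs"] that lBs by (simp add: Bx_def By_def)
  qed
  have QRsplit: "u @ v \<in> box QR \<longleftrightarrow> u \<in> box Qs \<and> v \<in> box Rs" if "length u = n" "length v = m" for u v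
    using box_append[of u Qs v Rs] that Qs(1) Rs(1) lx lfx by (simp add: QR_def)
  have Bxo: "lopen \<tau> Bx" unfolding Bx_def by (rule lopen_box) (use Bso lBs in auto)
  have Byo: "lopen \<tau> By" unfolding By_def by (rule lopen_box) (use Bso lBs in auto)

  define U where "U = {u \<in> X. u @ f u \<in> B}"
  define V where "V = f ` U"
  have xU: "x \<in> U" using xX xB by (simp add: U_def)
  have UU0: "U \<subseteq> U0"
  proof
    fix u assume u: "u \<in> U"
    then have uX: "u \<in> X" and uB: "u @ f u \<in> B" by (auto simp: U_def)
    then have "u @ f u \<in> box QR" using BQR by blast
    then have "u \<in> box Qs" using QRsplit XN[OF uX] fXN[OF uX] by blast
    then show "u \<in> U0" using Qs(4) OU(2) uX by blast
  qed
  have Ueq: "U = Bx \<inter> {u \<in> U0. f u \<in> By}"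
  proof (intro set_eqI iffI)
    fix u assume u: "u \<in> U"
    then have uX: "u \<in> X" and uB: "u @ f u \<in> B" by (auto simp: U_def)
    then show "u \<in> Bx \<inter> {u \<in> U0. f u \<in> By}" using Bsplit XN[OF uX] fXN[OF uX] UU0 u by blast
  next
    fix u assume u: "u \<in> Bx \<inter> {u \<in> U0. f u \<in> By}"
    then have uX: "u \<in> X" using U0X by blast
    then show "u \<in> U" using Bsplit XN[OF uX] fXN[OF uX] u by (simp add: U_def)
  qed
  have lcU0: "lcont \<tau> U0 f" using fU0 by (simp add: lhomeo_def)
  have "ropen \<tau> U0 {u \<in> U0. f u \<in> By}" using lcU0 Byo by (simp add: lcont_def)
  then have "ropen \<tau> X {u \<in> U0. f u \<in> By}" by (rule ropen_trans[OF U0(1)])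
  then have rU: "ropen \<tau> X U" unfolding Ueq by (rule ropen_Int[OF _ Bxo])
  have bij0: "bij_betw f U0 V0" using fU0 by (simp add: lhomeo_def)
  define g where "g = the_inv_into U0 f"
  have Veq: "V = By \<inter> {v \<in> V0. g v \<in> Bx}"
  proof (intro set_eqI iffI)
    fix v assume "v \<in> V"
    then obtain u where u: "u \<in> U" "v = f u" by (auto simp: V_def)
    have uU0: "u \<in> U0" using u(1) UU0 by blast
    have "v \<in> V0" using bij0 uU0 u(2) by (auto simp: bij_betw_def)
    moreover have "g v = u" using the_inv_into_f_f[OF bij_betw_imp_inj_on[OF bij0] uU0] u(2) by (simp add: g_def)
    moreover have "u \<in> Bx" "f u \<in> By" using u(1) Ueq by blast+
    ultimately show "v \<in> By \<inter> {v \<in> V0. g v \<in> Bx}" using u(2) by simp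
  next
    fix v assume v: "v \<in> By \<inter> {v \<in> V0. g v \<in> Bx}"
    then have vV0: "v \<in> V0" by blast
    have gU0: "g v \<in> U0" using bij_betw_the_inv_into[OF bij0] vV0 by (auto simp: g_def bij_betw_def)
    have fg: "f (g v) = v" using f_the_inv_into_f_bij_betw[OF bij0 vV0] by (simp add: g_def)
    have "g v \<in> U" unfolding Ueq using gU0 fg v by simp
    then show "v \<in> V" using fg by (metis V_def imageI)
  qed
  have lcV0: "lcont \<tau> V0 g" using fU0 by (simp add: lhomeo_def g_def)
  have "ropen \<tau> V0 {v \<in> V0. g v \<in> Bx}" using lcV0 Bxo by (simp add: lcont_def)
  then have "ropen \<tau> Y {v \<in> V0. g v \<in> Bx}" by (rule ropen_trans[OF V0(1)])
  then have rV: "ropen \<tau> Y V" unfolding Veq by (rule ropen_Int[OF _ Byo])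
  have fxV: "f x \<in> V" using xU by (simp add: V_def)
  have hUV: "lhomeo \<tau> U V f" unfolding V_def by (rule lhomeo_restrict[OF fU0 UU0])
  have grU: "graph U f = Z' \<inter> B"
  proof (intro set_eqI iffI)
    fix z assume "z \<in> graph U f"
    then obtain u where u: "u \<in> U" "z = u @ f u" by (auto simp: graph_def)
    then have uX: "u \<in> X" and uB: "u @ f u \<in> B" by (auto simp: U_def)
    have "z \<in> Z" using Zin[OF uX] u(2) by simp
    moreover have "z \<in> O'" using uB u(2) BPs Ps(4) by blast
    ultimately show "z \<in> Z' \<inter> B" using O'(2) uB u(2) by blast
  next
    fix z assume z: "z \<in> Z' \<inter> B"
    then have "z \<in> Z" using Z'(1) by blast
    then obtain u where u: "u \<in> X" "z = u @ f u" using Zdec by blast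
    then have "u \<in> U" using z by (simp add: U_def)
    then show "z \<in> graph U f" using u(2) by (auto simp: graph_def)
  qed
  have Z'T: "Z' \<subseteq> tuples (n + m)" using Z'(1) Zsub by blast
  have BT: "B \<subseteq> tuples (n + m)" using lBs by (auto simp: B_def box_def tuples_def)
  have defB: "definable I B" unfolding B_def Bs_def
    by (rule definable_box[OF B1]) (use BS in blast)
  have "defbl I UNIV Z'" using defbl_mono[OF _ Z'(3)] by blast
  then have defZB: "definable I (Z' \<inter> B)"
    using defbl_Int[OF _ _ Z'T BT] defB unfolding definable_def by blast
  have rZB: "ropen \<tau> Z' (Z' \<inter> B)" unfolding ropen_def using Blo by blast
  have "Z' \<inter> B \<in> S" using L3[of Z' "Z' \<inter> B"] Z'(4) defZB rZB by blast
  then have "loric_homeo \<tau> S U V f" using hUV grU by (simp add: loric_homeo_def)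
  then show ?thesis using rU xU rV fxV by blast
qed

end
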